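(* Let $b>1$ be a rational number and $d\in\{-163,-67,-43,-19,-11,-7,-3,-2,-1\}$. Let $U(b)=\{n\in\mathbb{N}:\sigma^*(n)=bn\}$ and $V_d(b)=\{z\in A(d): I_1^*(z)=b\}$, where $I_1^*$ is computed in $\mathcal O_{\mathbb{Q}(\sqrt{d})}$. Then there exists an injective function $g:U(b)\to V_d(b)$.
   Context: For a positive integer $n$, $\sigma^*(n)$ is the sum of the unitary divisors of $n$, i.e. of the positive divisors $c$ of $n$ with $\gcd(c,n/c)=1$. $\mathcal O_{\mathbb{Q}(\sqrt{d})}$ is $\mathbb{Z}[\frac{1+\sqrt d}{2}]$ if $d\equiv 1 \pmod 4$ and $\mathbb{Z}[\sqrt d]$ if $d\equiv 2,3\pmod 4$; for the listed $d$ it is a unique factorization domain. $|z|=\sqrt{z\bar z}$, $\arg(z)\in[0,2\pi)$. $A(d)$ is the set of nonzero $z\in\mathcal O_{\mathbb{Q}(\sqrt{d})}$ with $0\le\arg(z)<\pi/2$ if $d=-1$, with $0\le \arg(z)<\pi/3$ if $d=-3$, and with $0\le\arg(z)<\pi$ otherwise. Two elements are relatively prime if they have no nonunit common divisor. For nonzero $x,z$, write $x\Diamond z$ iff $x\in A(d)$, $x\mid z$, and $x$ is relatively prime to $z/x$. Define $\delta_1^*(z)=\sum_{x\Diamond z}|x|$ and $I_1^*(z)=\delta_1^*(z)/|z|$. *)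

theory Defs
  imports "HOL-Analysis.Analysis"
begin

definition sigma_star :: "nat \<Rightarrow> nat" where
  "sigma_star n = (\<Sum>c\<in>{c. c dvd n \<and> coprime c (n div c)}. c)"

text \<open>Generator of the ring of integers of Q(sqrt d), embedded in the complex numbers
  (for d < 0 we take sqrt d = i * sqrt |d|, i.e. the principal complex square root).\<close>
definition omega :: "int \<Rightarrow> complex" where
  "omega d = (if d mod 4 = 1 then (1 + csqrt (of_int d)) / 2 else csqrt (of_int d))"

definition Od :: "int \<Rightarrow> complex set" where
  "Od d = {of_int a + of_int b * omega d | a b. True}"

definition odvd :: "int \<Rightarrow> complex \<Rightarrow> complex \<Rightarrow> bool" where
  "odvd d x z \<longleftrightarrow> (\<exists>y\<in>Od d. z = x * y)"

definition ounit :: "int \<Rightarrow> complex \<Rightarrow> bool" where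
  "ounit d u \<longleftrightarrow> u \<in> Od d \<and> odvd d u 1"

definition orel_prime :: "int \<Rightarrow> complex \<Rightarrow> complex \<Rightarrow> bool" where
  "orel_prime d x y \<longleftrightarrow> (\<forall>c\<in>Od d. odvd d c x \<and> odvd d c y \<longrightarrow> ounit d c)"

definition arg0 :: "complex \<Rightarrow> real" where
  "arg0 z = (if Arg z < 0 then Arg z + 2 * pi else Arg z)"

definition Aset :: "int \<Rightarrow> complex set" where
  "Aset d = {z\<in>Od d. z \<noteq> 0 \<and> 0 \<le> arg0 z \<and>
     arg0 z < (if d = -1 then pi / 2 else if d = -3 then pi / 3 else pi)}"

definition diamond :: "int \<Rightarrow> complex \<Rightarrow> complex \<Rightarrow> bool" where
  "diamond d x z \<longleftrightarrow> x \<in> Aset d \<and> odvd d x z \<and> orel_prime d x (z / x)"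

definition delta1_star :: "int \<Rightarrow> complex \<Rightarrow> real" where
  "delta1_star d z = (\<Sum>x\<in>{x. diamond d x z}. cmod x)"

definition I1_star :: "int \<Rightarrow> complex \<Rightarrow> real" where
  "I1_star d z = delta1_star d z / cmod z"

definition U_set :: "rat \<Rightarrow> nat set" where
  "U_set b = {n. n > 0 \<and> of_nat (sigma_star n) = b * of_nat n}"

definition V_set :: "int \<Rightarrow> rat \<Rightarrow> complex set" where
  "V_set d b = {z\<in>Aset d. I1_star d z = of_rat b}"

end

theory Submission
  imports Defs "HOL-Computational_Algebra.Primes"
begin


definition tt :: "int \<Rightarrow> int" where "tt d = (if d mod 4 = 1 then 1 else 0)"
definition nn :: "int \<Rightarrow> int" where "nn d = (if d mod 4 = 1 then (1 - d) div 4 else - d)"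

lemma omega_neg: assumes "d < 0"
  shows "omega d = (if d mod 4 = 1 then (1 + \<i> * of_real (sqrt (- of_int d))) / 2 else \<i> * of_real (sqrt (- of_int d)))"
proof -
  have "csqrt (of_int d) = \<i> * of_real (sqrt \<bar>Re (of_int d)\<bar>)"
    using assms by (intro csqrt_of_real_nonpos) auto
  also have "\<bar>Re (of_int d)\<bar> = - of_int d" using assms by simp
  finally show ?thesis unfolding omega_def by simp
qed

lemma om_sum: assumes "d < 0" shows "omega d + cnj (omega d) = of_int (tt d)"
  using assms by (simp add: omega_neg tt_def complex_eq_iff)

lemma om_prod: assumes "d < 0" shows "omega d * cnj (omega d) = of_int (nn d)"
proof -
  have s: "sqrt (- real_of_int d) * sqrt (- real_of_int d) = - real_of_int d" using assms by simp
  show ?thesis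
  proof (cases "d mod 4 = 1")
    case True
    then obtain k where k: "d = 4*k+1" by (metis mult.commute div_mult_mod_eq add.commute)
    hence "(1 - d) div 4 = -k" by simp
    then show ?thesis using True assms s k by (simp add: omega_neg nn_def complex_eq_iff field_simps)
  next
    case False
    then show ?thesis using assms s by (simp add: omega_neg nn_def complex_eq_iff)
  qed
qed

lemma om_sq: assumes "d < 0" shows "omega d * omega d = of_int (tt d) * omega d - of_int (nn d)"
proof -
  have "cnj (omega d) = of_int (tt d) - omega d" using om_sum[OF assms] by (simp add: algebra_simps eq_diff_eq)
  with om_prod[OF assms] show ?thesis by (simp add: algebra_simps)
qed


definition nrm :: "complex \<Rightarrow> int" where "nrm z = \<lfloor>(cmod z)^2\<rfloor>"

locale qf = fixes d :: int assumes dneg: "d < 0"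
begin

abbreviation "w \<equiv> omega d"
abbreviation "Rg \<equiv> Od d"

lemma Od_iff: "z \<in> Rg \<longleftrightarrow> (\<exists>a b. z = of_int a + of_int b * w)"
  unfolding Od_def by auto

lemma Od_int[simp]: "of_int k \<in> Rg"
  unfolding Od_iff by (rule exI[of _ k], rule exI[of _ 0]) simp
lemma Od_nat[simp]: "of_nat k \<in> Rg"
  using Od_int[of "int k"] by simp
lemma Od_0[simp]: "0 \<in> Rg" using Od_int[of 0] by simp
lemma Od_1[simp]: "1 \<in> Rg" using Od_int[of 1] by simp
lemma Od_numeral[simp]: "numeral k \<in> Rg" using Od_int[of "numeral k"] by simp
lemma Od_w[simp]: "w \<in> Rg"
  unfolding Od_iff by (rule exI[of _ 0], rule exI[of _ 1]) simp

lemma Od_add[simp]: "x \<in> Rg \<Longrightarrow> y \<in> Rg \<Longrightarrow> x + y \<in> Rg"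
  unfolding Od_iff
  by (auto, rule_tac x="a+aa" in exI, rule_tac x="b+ba" in exI, simp add: algebra_simps)

lemma Od_uminus[simp]: "x \<in> Rg \<Longrightarrow> - x \<in> Rg"
  unfolding Od_iff
  by (auto, rule_tac x="-a" in exI, rule_tac x="-b" in exI, simp add: algebra_simps)

lemma Od_diff[simp]: "x \<in> Rg \<Longrightarrow> y \<in> Rg \<Longrightarrow> x - y \<in> Rg"
  using Od_add[of x "-y"] by simp

lemma Od_mult[simp]: "x \<in> Rg \<Longrightarrow> y \<in> Rg \<Longrightarrow> x * y \<in> Rg"
proof -
  assume "x \<in> Rg" "y \<in> Rg"
  then obtain a b c e where xy: "x = of_int a + of_int b * w" "y = of_int c + of_int e * w"
    unfolding Od_iff by blast
  have "x * y = of_int a * of_int c + (of_int a * of_int e + of_int b * of_int c) * w + of_int b * of_int e * (w * w)"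
    unfolding xy by (simp add: algebra_simps)
  also have "\<dots> = of_int (a*c - nn d * b * e) + of_int (a*e + b*c + tt d * b * e) * w"
    unfolding om_sq[OF dneg] by (simp add: algebra_simps)
  finally have "x * y = of_int (a*c - nn d * b * e) + of_int (a*e + b*c + tt d * b * e) * w" .
  thus ?thesis unfolding Od_iff by blast
qed

lemma Od_cnj[simp]: "x \<in> Rg \<Longrightarrow> cnj x \<in> Rg"
proof -
  assume "x \<in> Rg"
  then obtain a b where xy: "x = of_int a + of_int b * w" unfolding Od_iff by blast
  have "cnj w = of_int (tt d) - w" using om_sum[OF dneg] by (simp add: algebra_simps eq_diff_eq)
  hence "cnj x = of_int a + of_int b * (of_int (tt d) - w)" unfolding xy by simp
  hence "cnj x = of_int (a + b * tt d) + of_int (-b) * w" by (simp add: algebra_simps)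
  thus ?thesis unfolding Od_iff by blast
qed

lemma Od_power[simp]: "x \<in> Rg \<Longrightarrow> x ^ k \<in> Rg"
  by (induction k) auto

lemma Od_prod[simp]: "(\<And>i. i \<in> S \<Longrightarrow> f i \<in> Rg) \<Longrightarrow> prod f S \<in> Rg"
  by (induction S rule: infinite_finite_induct) auto

lemma norm_coord: "(of_int a + of_int b * w) * cnj (of_int a + of_int b * w) = of_int (a^2 + tt d * a * b + nn d * b^2)"
proof -
  have "(of_int a + of_int b * w) * cnj (of_int a + of_int b * w)
      = of_int a * of_int a + of_int a * of_int b * (w + cnj w) + of_int b * of_int b * (w * cnj w)"
    by (simp add: algebra_simps)
  also have "\<dots> = of_int (a^2 + tt d * a * b + nn d * b^2)"
    by (simp add: om_sum[OF dneg] om_prod[OF dneg] power2_eq_square)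
  finally show ?thesis .
qed

lemma Od_norm_int: "x \<in> Rg \<Longrightarrow> \<exists>k. x * cnj x = of_int k"
  unfolding Od_iff using norm_coord by blast

lemma nrm_eq: "x \<in> Rg \<Longrightarrow> x * cnj x = of_int (nrm x)"
proof -
  assume "x \<in> Rg"
  then obtain k where k: "x * cnj x = of_int k" using Od_norm_int by blast
  have "(cmod x)^2 = Re (x * cnj x)" by (simp add: complex_mult_cnj cmod_power2)
  hence "(cmod x)^2 = of_int k" using k by simp
  hence "nrm x = k" unfolding nrm_def by simp
  thus ?thesis using k by simp
qed

lemma nrm_cmod: "x \<in> Rg \<Longrightarrow> of_int (nrm x) = (cmod x)^2"
proof -
  assume x: "x \<in> Rg"
  have "(cmod x)^2 = Re (x * cnj x)" by (simp add: complex_mult_cnj cmod_power2)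
  thus ?thesis using nrm_eq[OF x] by simp
qed

lemma nrm_coord: "nrm (of_int a + of_int b * w) = a^2 + tt d * a * b + nn d * b^2"
proof -
  have "of_int (nrm (of_int a + of_int b * w)) = (of_int (a^2 + tt d * a * b + nn d * b^2) :: complex)"
    using nrm_eq[of "of_int a + of_int b * w"] norm_coord[of a b] unfolding Od_iff by metis
  thus ?thesis using of_int_eq_iff by blast
qed

lemma nrm_nonneg: "x \<in> Rg \<Longrightarrow> nrm x \<ge> 0"
  using nrm_cmod[of x] by (metis of_int_0_le_iff zero_le_power2)

lemma nrm_zero_iff: "x \<in> Rg \<Longrightarrow> nrm x = 0 \<longleftrightarrow> x = 0"
  using nrm_cmod[of x] by (metis norm_eq_zero of_int_eq_0_iff zero_eq_power2)

lemma nrm_mult: "x \<in> Rg \<Longrightarrow> y \<in> Rg \<Longrightarrow> nrm (x * y) = nrm x * nrm y"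
  using nrm_cmod[of x] nrm_cmod[of y] nrm_cmod[of "x*y"]
  by (metis Od_mult norm_mult of_int_eq_iff of_int_mult power_mult_distrib)

lemma nrm_int[simp]: "nrm (of_int k) = k^2"
  unfolding nrm_def by simp (metis floor_of_int of_int_abs of_int_power power2_abs)

lemma nrm_nat[simp]: "nrm (of_nat k) = int k^2"
  using nrm_int[of "int k"] by simp

lemma nrm_cnj: "nrm (cnj x) = nrm x" unfolding nrm_def by simp

lemma nrm_power: "x \<in> Rg \<Longrightarrow> nrm (x ^ k) = nrm x ^ k"
proof (induction k)
  case 0 then show ?case by (simp add: nrm_def)
next
  case (Suc k) then show ?case by (simp add: nrm_mult)
qed

end


context qf begin

abbreviation dv (infix "\<preceq>" 50) where "x \<preceq> y \<equiv> odvd d x y"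

lemma dv_refl: "x \<in> Rg \<Longrightarrow> x \<preceq> x"
  unfolding odvd_def by (rule bexI[of _ 1]) auto

lemma dv_trans: "x \<preceq> y \<Longrightarrow> y \<preceq> z \<Longrightarrow> x \<preceq> z"
  unfolding odvd_def by (auto simp: mult.assoc)

lemma dv_mult_right: "x \<preceq> y \<Longrightarrow> c \<in> Rg \<Longrightarrow> x \<preceq> y * c"
  unfolding odvd_def by (auto simp: mult.assoc)

lemma dv_mult_left: "x \<preceq> y \<Longrightarrow> c \<in> Rg \<Longrightarrow> x \<preceq> c * y"
  by (metis dv_mult_right mult.commute)

lemma dv_times: "x \<in> Rg \<Longrightarrow> c \<in> Rg \<Longrightarrow> x \<preceq> x * c"
  unfolding odvd_def by auto

lemma dv_times2: "x \<in> Rg \<Longrightarrow> c \<in> Rg \<Longrightarrow> x \<preceq> c * x"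
  unfolding odvd_def by (auto simp: mult.commute)

lemma dv_add: "x \<preceq> y \<Longrightarrow> x \<preceq> z \<Longrightarrow> x \<preceq> y + z"
  unfolding odvd_def by (auto simp: distrib_left) (metis Od_add distrib_left)

lemma dv_diff: "x \<preceq> y \<Longrightarrow> x \<preceq> z \<Longrightarrow> x \<preceq> y - z"
  unfolding odvd_def by (auto simp: right_diff_distrib) (metis Od_diff right_diff_distrib)

lemma dv_0: "x \<preceq> 0" unfolding odvd_def by (rule bexI[of _ 0]) auto

lemma dv_mono: "x \<preceq> y \<Longrightarrow> a \<in> Rg \<Longrightarrow> a * x \<preceq> a * y"
  unfolding odvd_def by (auto simp: mult.assoc)

lemma dv_cancel: "a * x \<preceq> a * y \<Longrightarrow> a \<noteq> 0 \<Longrightarrow> x \<preceq> y"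
  unfolding odvd_def by (auto simp: mult.assoc)

lemma dv_nrm: "x \<in> Rg \<Longrightarrow> x \<preceq> y \<Longrightarrow> nrm x dvd nrm y"
  unfolding odvd_def by (auto simp: nrm_mult)

lemma dv_Rg: "x \<in> Rg \<Longrightarrow> x \<preceq> y \<Longrightarrow> y \<in> Rg"
  unfolding odvd_def by auto

lemma dv_cnj: "x \<preceq> y \<Longrightarrow> cnj x \<preceq> cnj y"
  unfolding odvd_def by (auto intro!: bexI[of _ "cnj _"])

lemma dv_div: "x \<preceq> y \<Longrightarrow> x \<noteq> 0 \<Longrightarrow> y / x \<in> Rg \<and> y = x * (y / x)"
  unfolding odvd_def by auto

lemma nrm_1[simp]: "nrm 1 = 1" using nrm_int[of 1] by simp
lemma nrm_0[simp]: "nrm 0 = 0" using nrm_int[of 0] by simp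

lemma unit_iff: "ounit d u \<longleftrightarrow> u \<in> Rg \<and> nrm u = 1"
proof
  assume "ounit d u"
  then obtain y where y: "u \<in> Rg" "y \<in> Rg" "1 = u * y" unfolding ounit_def odvd_def by auto
  hence "nrm u * nrm y = 1" using nrm_mult[of u y] by simp
  hence "nrm u = 1 \<or> nrm u = -1" using pos_zmult_eq_1_iff_lemma by blast
  thus "u \<in> Rg \<and> nrm u = 1" using y nrm_nonneg[of u] by auto
next
  assume "u \<in> Rg \<and> nrm u = 1"
  thus "ounit d u" unfolding ounit_def odvd_def using nrm_eq[of u] by (auto intro!: bexI[of _ "cnj u"])
qed

lemma unit_nz: "ounit d u \<Longrightarrow> u \<noteq> 0" unfolding unit_iff by auto

lemma unit_inv: "ounit d u \<Longrightarrow> ounit d (1 / u) \<and> 1/u = cnj u"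
proof -
  assume u: "ounit d u"
  hence "u * cnj u = 1" unfolding unit_iff using nrm_eq[of u] by auto
  hence "1/u = cnj u" by (metis div_by_1 nonzero_eq_divide_eq mult_eq_0_iff mult.commute zero_neq_one)
  thus ?thesis using u unfolding unit_iff by (simp add: nrm_cnj)
qed

lemma unit_mult: "ounit d u \<Longrightarrow> ounit d v \<Longrightarrow> ounit d (u * v)"
  unfolding unit_iff by (auto simp: nrm_mult)

lemma unit_dv: "ounit d u \<Longrightarrow> y \<in> Rg \<Longrightarrow> u \<preceq> y"
proof -
  assume u: "ounit d u" and y: "y \<in> Rg"
  then have "y = u * (cnj u * y)" "cnj u * y \<in> Rg"
    using nrm_eq[of u] unfolding unit_iff by (auto simp: mult.assoc[symmetric])
  thus ?thesis unfolding odvd_def by blast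
qed

lemma dv_unit: "x \<in> Rg \<Longrightarrow> x \<preceq> 1 \<Longrightarrow> ounit d x"
  unfolding ounit_def by simp

lemma Im_w: "Im w > 0"
  using dneg by (simp add: omega_neg)

lemma coord_unique: "of_int a + of_int b * w = of_int a' + of_int b' * w \<Longrightarrow> a = a' \<and> b = b'"
proof -
  assume h: "of_int a + of_int b * w = of_int a' + of_int b' * w"
  hence "Im (of_int a + of_int b * w) = Im (of_int a' + of_int b' * w)" by simp
  hence "of_int b * Im w = of_int b' * Im w" by simp
  hence "b = b'" using Im_w by simp
  with h show ?thesis by simp
qed

lemma real_in_Rg: "y \<in> Rg \<Longrightarrow> Im y = 0 \<Longrightarrow> \<exists>k. y = of_int k"
proof -
  assume "y \<in> Rg" "Im y = 0"
  then obtain a b where y: "y = of_int a + of_int b * w" unfolding Od_iff by blast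
  with \<open>Im y = 0\<close> have "of_int b * Im w = 0" by simp
  hence "b = 0" using Im_w by simp
  thus ?thesis using y by auto
qed

lemma int_dv_int: "(of_int p :: complex) \<preceq> of_int m \<longleftrightarrow> p dvd m"
proof
  assume h: "(of_int p :: complex) \<preceq> of_int m"
  then obtain y where y: "y \<in> Rg" "of_int m = of_int p * y" unfolding odvd_def by auto
  show "p dvd m"
  proof (cases "p = 0")
    case True thus ?thesis using y by simp
  next
    case False
    hence "y = of_int m / of_int p" using y by (simp add: field_simps)
    hence "Im y = 0" by (simp add: Im_divide)
    then obtain k where "y = of_int k" using real_in_Rg y by blast
    hence "m = p * k" using y by (metis of_int_eq_iff of_int_mult)
    thus ?thesis by simp
  qed
next
  assume "p dvd m" thus "(of_int p :: complex) \<preceq> of_int m"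
    unfolding odvd_def by (auto intro!: bexI[of _ "of_int (m div p)"])
qed

definition oprime :: "complex \<Rightarrow> bool" where
  "oprime x \<longleftrightarrow> x \<in> Rg \<and> x \<noteq> 0 \<and> \<not> ounit d x \<and> (\<forall>a\<in>Rg. \<forall>b\<in>Rg. x \<preceq> a * b \<longrightarrow> x \<preceq> a \<or> x \<preceq> b)"

lemma bezout_inv: fixes b p :: int assumes "prime p" "\<not> p dvd b" shows "\<exists>u v. u * b + v * p = 1"
proof -
  have "coprime p b" using assms by (simp add: prime_imp_coprime)
  hence "gcd b p = 1" by (metis coprime_commute coprime_iff_gcd_eq_1)
  thus ?thesis using bezout_int[of b p] by metis
qed

lemma prime_norm_oprime:
  assumes r: "r \<in> Rg" and np: "nrm r = p" and pp: "prime p"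
  shows "oprime r"
proof -
  obtain a b where pab: "r = of_int a + of_int b * w" using r unfolding Od_iff by blast
  have N: "p = a^2 + tt d * a * b + nn d * b^2" using np pab nrm_coord by simp
  have pn1: "p \<noteq> 1" "p > 1" using pp prime_gt_1_int by auto
  have nb: "\<not> p dvd b"
  proof
    assume "p dvd b"
    then obtain b' where b': "b = p * b'" by auto
    hence "p dvd a^2" using N by (metis dvd_add_times_triv_right_iff dvd_triv_left mult.commute power2_eq_square
        add.commute mult.left_commute dvd_mult dvd_refl)
    hence "p dvd a" using pp prime_dvd_power_int by blast
    then obtain a' where a': "a = p * a'" by auto
    have "r = of_int p * (of_int a' + of_int b' * w)" using pab a' b' by (simp add: algebra_simps)
    hence "nrm r = p^2 * nrm (of_int a' + of_int b' * w)" by (simp add: nrm_mult)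
    hence "p = p^2 * nrm (of_int a' + of_int b' * w)" using np by simp
    hence "p^2 dvd p" by (rule dvdI)
    hence "p^2 \<le> p" using pn1 by (intro zdvd_imp_le) auto
    moreover have "p * 1 < p * p" using pn1 by (intro mult_strict_left_mono) auto
    ultimately show False by (simp add: power2_eq_square)
  qed
  have pip: "r \<preceq> of_int p"
    unfolding odvd_def using nrm_eq[OF r] np by (auto intro!: bexI[of _ "cnj r"] simp: r)
  have dint: "p dvd m" if "r \<preceq> of_int m" for m
  proof -
    have "nrm r dvd nrm (of_int m)" using dv_nrm[OF r that] .
    hence "p dvd m^2" using np by simp
    thus ?thesis using pp prime_dvd_power_int by blast
  qed
  have key: "of_int b * (of_int x + of_int y * w) = of_int (b*x - y*a) + of_int y * r" for x y
    unfolding pab by (simp add: algebra_simps)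
  have nz: "r \<noteq> 0" using np pp nrm_zero_iff[OF r] by auto
  have nu: "\<not> ounit d r" using np pn1 unfolding unit_iff by auto
  have cancel_b: "r \<preceq> \<alpha>" if "r \<preceq> of_int b * \<alpha>" "\<alpha> \<in> Rg" for \<alpha>
  proof -
    obtain u v where uv: "u * b + v * p = 1" using bezout_inv[OF pp nb] by blast
    have "\<alpha> = of_int u * (of_int b * \<alpha>) + of_int v * (of_int p * \<alpha>)"
      using uv by (metis mult.assoc distrib_right mult_1 of_int_1 of_int_add of_int_mult)
    moreover have "r \<preceq> of_int u * (of_int b * \<alpha>)" using that dv_mult_left by simp
    moreover have "r \<preceq> of_int v * (of_int p * \<alpha>)"
      by (rule dv_mult_left[OF dv_mult_right[OF pip that(2)]]) simp
    ultimately show ?thesis using dv_add by metis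
  qed
  have "r \<preceq> \<alpha> \<or> r \<preceq> \<beta>" if ab: "\<alpha> \<in> Rg" "\<beta> \<in> Rg" "r \<preceq> \<alpha> * \<beta>" for \<alpha> \<beta>
  proof -
    obtain x y where a: "\<alpha> = of_int x + of_int y * w" using ab unfolding Od_iff by blast
    obtain x' y' where b: "\<beta> = of_int x' + of_int y' * w" using ab unfolding Od_iff by blast
    define m1 where "m1 = b*x - y*a"
    define m2 where "m2 = b*x' - y'*a"
    have e1: "of_int b * \<alpha> = of_int m1 + of_int y * r" using key a m1_def by simp
    have e2: "of_int b * \<beta> = of_int m2 + of_int y' * r" using key b m2_def by simp
    have "of_int (m1 * m2) = (of_int b * \<alpha>) * (of_int b * \<beta>) - r * (of_int m1 * of_int y' + of_int y * of_int m2 + of_int y * of_int y' * r)"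
      unfolding e1 e2 by (simp add: algebra_simps)
    moreover have "r \<preceq> (of_int b * \<alpha>) * (of_int b * \<beta>)"
    proof -
      have eq: "(of_int b * \<alpha>) * (of_int b * \<beta>) = (of_int b * of_int b) * (\<alpha> * \<beta>)" by (simp add: algebra_simps)
      show ?thesis unfolding eq by (rule dv_mult_left[OF ab(3)]) simp
    qed
    moreover have "r \<preceq> r * (of_int m1 * of_int y' + of_int y * of_int m2 + of_int y * of_int y' * r)"
      using r by (intro dv_times) auto
    ultimately have "r \<preceq> of_int (m1 * m2)" using dv_diff by metis
    hence "p dvd m1 * m2" using dint by blast
    hence "p dvd m1 \<or> p dvd m2" using pp prime_dvd_mult_int by blast
    thus ?thesis
    proof
      assume "p dvd m1"
      hence "r \<preceq> of_int m1" using pip int_dv_int dv_trans by blast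
      hence "r \<preceq> of_int b * \<alpha>" unfolding e1 using dv_add dv_times2 r by auto
      thus ?thesis using cancel_b ab by blast
    next
      assume "p dvd m2"
      hence "r \<preceq> of_int m2" using pip int_dv_int dv_trans by blast
      hence "r \<preceq> of_int b * \<beta>" unfolding e2 using dv_add dv_times2 r by auto
      thus ?thesis using cancel_b ab by blast
    qed
  qed
  thus ?thesis unfolding oprime_def using r nz nu by blast
qed

end


context qf begin

lemma tt_cases: "tt d = 0 \<or> tt d = 1" unfolding tt_def by auto

lemma nn_pos: "nn d \<ge> 1"
proof (cases "d mod 4 = 1")
  case True
  then obtain k where k: "d = 4*k+1" by (metis mult.commute div_mult_mod_eq add.commute)
  hence "(1 - d) div 4 = -k" by simp
  thus ?thesis using True dneg k unfolding nn_def by simp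
next
  case False thus ?thesis using dneg unfolding nn_def by simp
qed

lemma trace_int: "y \<in> Rg \<Longrightarrow> \<exists>k. y + cnj y = of_int k"
  using real_in_Rg[of "y + cnj y"] by simp

definition Ig :: "complex \<Rightarrow> int \<Rightarrow> complex set" where
  "Ig a p = {x. \<exists>s\<in>Rg. \<exists>t\<in>Rg. x = s * a + t * of_int p}"

lemma Ig_sub: "a \<in> Rg \<Longrightarrow> x \<in> Ig a p \<Longrightarrow> x \<in> Rg"
  unfolding Ig_def by auto

lemma Ig_mult: "x \<in> Ig a p \<Longrightarrow> c \<in> Rg \<Longrightarrow> c * x \<in> Ig a p"
proof -
  assume "x \<in> Ig a p" "c \<in> Rg"
  then obtain s t where "s \<in> Rg" "t \<in> Rg" "x = s * a + t * of_int p" unfolding Ig_def by auto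
  hence "c * s \<in> Rg" "c * t \<in> Rg" "c * x = (c * s) * a + (c * t) * of_int p" using \<open>c \<in> Rg\<close> by (auto simp: algebra_simps)
  thus ?thesis unfolding Ig_def by blast
qed

lemma Ig_add: "x \<in> Ig a p \<Longrightarrow> y \<in> Ig a p \<Longrightarrow> x + y \<in> Ig a p"
proof -
  assume "x \<in> Ig a p" "y \<in> Ig a p"
  then obtain s t s' t' where "s \<in> Rg" "t \<in> Rg" "x = s * a + t * of_int p" "s' \<in> Rg" "t' \<in> Rg" "y = s' * a + t' * of_int p" unfolding Ig_def by auto
  hence "s + s' \<in> Rg" "t + t' \<in> Rg" "x + y = (s + s') * a + (t + t') * of_int p" by (auto simp: algebra_simps)
  thus ?thesis unfolding Ig_def by blast
qed

lemma Ig_diff: "x \<in> Ig a p \<Longrightarrow> y \<in> Ig a p \<Longrightarrow> x - y \<in> Ig a p"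
proof -
  assume "x \<in> Ig a p" "y \<in> Ig a p"
  then obtain s t s' t' where "s \<in> Rg" "t \<in> Rg" "x = s * a + t * of_int p" "s' \<in> Rg" "t' \<in> Rg" "y = s' * a + t' * of_int p" unfolding Ig_def by auto
  hence "s - s' \<in> Rg" "t - t' \<in> Rg" "x - y = (s - s') * a + (t - t') * of_int p" by (auto simp: algebra_simps)
  thus ?thesis unfolding Ig_def by blast
qed

lemma Ig_p: "c \<in> Rg \<Longrightarrow> of_int p * c \<in> Ig a p"
  unfolding Ig_def by (rule CollectI, rule bexI[of _ 0], rule bexI[of _ c]) auto

lemma Ig_a: "a \<in> Ig a p"
  unfolding Ig_def by (rule CollectI, rule bexI[of _ 1], rule bexI[of _ 0]) auto

lemma Ig_nrm: assumes a: "a \<in> Rg" and pa: "p dvd nrm a" and x: "x \<in> Ig a p"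
  shows "p dvd nrm x"
proof -
  obtain s t where st: "s \<in> Rg" "t \<in> Rg" "x = s * a + t * of_int p" using x unfolding Ig_def by auto
  have xR: "x \<in> Rg" using st a by auto
  define y where "y = s * a * cnj t"
  have yR: "y \<in> Rg" using st a y_def by auto
  obtain k where k: "y + cnj y = of_int k" using trace_int[OF yR] by blast
  have "(of_int (nrm x) :: complex) = x * cnj x" using nrm_eq[OF xR] by simp
  also have "\<dots> = (s * cnj s) * (a * cnj a) + of_int p * (y + cnj y) + of_int p * of_int p * (t * cnj t)"
    unfolding st y_def by (simp add: algebra_simps)
  also have "\<dots> = of_int (nrm s * nrm a + p * k + p * p * nrm t)"
    using nrm_eq[of s] nrm_eq[of a] nrm_eq[of t] st a k by simp
  finally have "nrm x = nrm s * nrm a + p * k + p * p * nrm t" using of_int_eq_iff by blast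
  thus ?thesis using pa by simp
qed

text \<open>Thue-type bound: a small nonzero element in the ideal.\<close>
lemma thue:
  assumes a: "a \<in> Rg" and pp: "prime p" and pa: "p dvd nrm a" and npa: "\<not> (of_int p \<preceq> a)"
  shows "\<exists>x\<in>Ig a p. x \<noteq> 0 \<and> real_of_int (nrm x) \<le> (2 * sqrt (nn d) + tt d) * p"
proof -
  obtain a0 b0 where ab: "a = of_int a0 + of_int b0 * w" using a unfolding Od_iff by blast
  have Na: "nrm a = a0^2 + tt d * a0 * b0 + nn d * b0^2" using ab nrm_coord by simp
  have nb: "\<not> p dvd b0"
  proof
    assume "p dvd b0"
    then obtain b' where b': "b0 = p * b'" by auto
    have "p dvd a0^2 + tt d * a0 * b0 + nn d * b0^2" using pa Na by simp
    moreover have "p dvd tt d * a0 * b0 + nn d * b0^2" using b' by (intro dvd_add) (auto simp: power2_eq_square)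
    ultimately have "p dvd a0^2" using dvd_add_left_iff[of p "tt d * a0 * b0 + nn d * b0^2" "a0^2"] by (simp add: add.assoc)
    hence "p dvd a0" using pp prime_dvd_power_int by blast
    then obtain a' where a': "a0 = p * a'" by auto
    have "a = of_int p * (of_int a' + of_int b' * w)" using ab a' b' by (simp add: algebra_simps)
    moreover have "of_int a' + of_int b' * w \<in> Rg" by simp
    ultimately have "of_int p \<preceq> a" unfolding odvd_def by blast
    thus False using npa by simp
  qed
  have p1: "p > 1" using pp prime_gt_1_int by auto
  define n where "n = real_of_int (nn d)"
  have n1: "n \<ge> 1" using nn_pos n_def by simp
  define l where "l = sqrt (sqrt n)"
  have lpos: "l > 0" using n1 l_def by simp
  have l2: "l^2 = sqrt n" using l_def n1 by simp
  define sp where "sp = sqrt (real_of_int p)"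
  have sppos: "sp > 0" using p1 sp_def by simp
  have sp2: "sp^2 = p" using p1 sp_def by simp
  define A where "A = nat \<lfloor>l * sp\<rfloor>"
  define B where "B = nat \<lfloor>sp / l\<rfloor>"
  have "real A = of_int \<lfloor>l * sp\<rfloor>" unfolding A_def using lpos sppos by simp
  hence A1: "real A \<le> l * sp" "l * sp < real A + 1" using floor_correct[of "l * sp"] by linarith+
  have "real B = of_int \<lfloor>sp / l\<rfloor>" unfolding B_def using lpos sppos by simp
  hence B1: "real B \<le> sp / l" "sp / l < real B + 1" using floor_correct[of "sp / l"] by linarith+
  have "(real A + 1) * (real B + 1) > (l * sp) * (sp / l)"
    using A1 B1 lpos sppos by (intro mult_strict_mono) auto
  hence "(real A + 1) * (real B + 1) > p" using lpos sp2 by (simp add: power2_eq_square)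
  hence card_gt: "(A + 1) * (B + 1) > nat p"
  proof -
    assume h: "(real A + 1) * (real B + 1) > p"
    have "real (nat p) = real_of_int p" using p1 by simp
    hence "real (nat p) < real ((A + 1) * (B + 1))" using h by (simp add: algebra_simps)
    thus ?thesis by (simp only: of_nat_less_iff)
  qed
  define S where "S = {0..A} \<times> {0..B}"
  define F where "F = (\<lambda>(x::nat, y::nat). (b0 * int x - a0 * int y) mod p)"
  have "\<not> inj_on F S"
  proof
    assume inj: "inj_on F S"
    have "F ` S \<subseteq> {0..<p}" unfolding F_def using p1 by auto
    hence "card S \<le> card {0..<p}" using inj by (intro card_inj_on_le) auto
    thus False using card_gt unfolding S_def by simp
  qed
  then obtain x1 y1 x2 y2 where s: "(x1, y1) \<in> S" "(x2, y2) \<in> S" "(x1, y1) \<noteq> (x2, y2)" "F (x1, y1) = F (x2, y2)"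
    unfolding inj_on_def by auto
  define dx where "dx = int x1 - int x2"
  define dy where "dy = int y1 - int y2"
  have dxb: "\<bar>dx\<bar> \<le> int A" "\<bar>dy\<bar> \<le> int B" using s unfolding S_def dx_def dy_def by auto
  have dnz: "dx \<noteq> 0 \<or> dy \<noteq> 0" using s(3) unfolding dx_def dy_def by auto
  have "p dvd (b0 * int x1 - a0 * int y1) - (b0 * int x2 - a0 * int y2)"
    using s(4) unfolding F_def by (simp add: mod_eq_dvd_iff)
  hence "p dvd b0 * dx - a0 * dy" unfolding dx_def dy_def by (simp add: algebra_simps)
  then obtain k where k: "b0 * dx - a0 * dy = p * k" by auto
  define x where "x = of_int dx + of_int dy * w"
  have xR: "x \<in> Rg" unfolding x_def by simp
  have "of_int b0 * x = of_int (b0 * dx - a0 * dy) + of_int dy * a"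
    unfolding x_def ab by (simp add: algebra_simps)
  also have "\<dots> = of_int p * of_int k + of_int dy * a" using k by simp
  finally have bx: "of_int b0 * x \<in> Ig a p" using Ig_add[OF Ig_p Ig_mult[OF Ig_a]] by simp
  obtain u v where uv: "u * b0 + v * p = 1" using bezout_inv[OF pp nb] by blast
  have "x = of_int u * (of_int b0 * x) + of_int p * (of_int v * x)"
  proof -
    have "(of_int u * of_int b0 + of_int v * of_int p :: complex) = 1" using uv by (metis of_int_1 of_int_add of_int_mult)
    hence "x = (of_int u * of_int b0 + of_int v * of_int p) * x" by simp
    thus ?thesis by (simp add: algebra_simps)
  qed
  hence xI: "x \<in> Ig a p" using Ig_add[OF Ig_mult[OF bx] Ig_p] xR by (metis Od_int Od_mult)
  have xnz: "x \<noteq> 0" using dnz coord_unique[of dx dy 0 0] unfolding x_def by auto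
  have Nx: "nrm x = dx^2 + tt d * dx * dy + nn d * dy^2" unfolding x_def by (rule nrm_coord)
  have "real_of_int (nrm x) \<le> real A ^ 2 + tt d * (real A * real B) + n * real B ^ 2"
  proof -
    have "\<bar>dx\<bar>^2 \<le> (int A)^2" using dxb by (intro power_mono) auto
    hence h1: "real_of_int (dx^2) \<le> real A ^ 2" by (metis of_int_le_iff of_int_of_nat_eq of_int_power power2_abs)
    have "\<bar>dy\<bar>^2 \<le> (int B)^2" using dxb by (intro power_mono) auto
    hence h2: "real_of_int (dy^2) \<le> real B ^ 2" by (metis of_int_le_iff of_int_of_nat_eq of_int_power power2_abs)
    have "\<bar>dx * dy\<bar> \<le> int A * int B" using dxb by (simp add: abs_mult mult_mono)
    hence "dx * dy \<le> int A * int B" by linarith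
    hence h3: "real_of_int (dx * dy) \<le> real A * real B" by (metis of_int_le_iff of_int_mult of_int_of_nat_eq)
    have t0: "real_of_int (tt d) \<ge> 0" using tt_cases by auto
    have h4: "real_of_int (tt d) * real_of_int (dx * dy) \<le> real_of_int (tt d) * (real A * real B)"
      using h3 t0 by (rule mult_left_mono)
    have h5: "n * real_of_int (dy^2) \<le> n * real B ^ 2" using h2 n1 by (intro mult_left_mono) auto
    have "real_of_int (nrm x) = real_of_int (dx^2) + real_of_int (tt d) * real_of_int (dx * dy) + n * real_of_int (dy^2)"
      unfolding Nx n_def by simp
    thus ?thesis using h1 h4 h5 by linarith
  qed
  also have "\<dots> \<le> (2 * sqrt n + tt d) * p"
  proof -
    have "real A ^ 2 \<le> (l * sp)^2" using A1 by (simp add: power_mono)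
    also have "\<dots> = sqrt n * p" using l2 sp2 by (simp add: power_mult_distrib)
    finally have i1: "real A ^ 2 \<le> sqrt n * p" .
    have "real B ^ 2 \<le> (sp / l)^2" using B1 by (simp add: power_mono)
    also have "\<dots> = p / sqrt n" using l2 sp2 by (simp add: power_divide)
    finally have hb: "real B ^ 2 \<le> p / sqrt n" .
    have "n * real B ^ 2 \<le> n * (p / sqrt n)" by (rule mult_left_mono[OF hb]) (use n1 in auto)
    also have "n * (p / sqrt n) = sqrt n * p"
    proof -
      have sn: "sqrt n * sqrt n = n" "sqrt n > 0" using n1 by auto
      have "n * (p / sqrt n) = (sqrt n * sqrt n) * p / sqrt n" using sn by simp
      also have "\<dots> = sqrt n * p" using sn(2) by (simp only: times_divide_eq_right[symmetric]) (simp add: field_simps)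
      finally show ?thesis .
    qed
    finally have i2: "n * real B ^ 2 \<le> sqrt n * p" .
    have "real A * real B \<le> (l * sp) * (sp / l)" using A1 B1 by (intro mult_mono) auto
    also have "\<dots> = p" using lpos sp2 by (simp add: power2_eq_square)
    finally have i3: "real A * real B \<le> p" .
    have "tt d * (real A * real B) \<le> tt d * p" using i3 tt_cases by auto
    thus ?thesis using i1 i2 by (simp add: algebra_simps)
  qed
  finally show ?thesis using xI xnz n_def by auto
qed

end


context qf begin

definition inert :: "int \<Rightarrow> bool" where
  "inert q \<longleftrightarrow> (\<forall>x\<in>Rg. q dvd nrm x \<longrightarrow> of_int q \<preceq> x)"

lemma coprime_bezout_int: fixes a b :: int assumes "coprime a b" shows "\<exists>u v. u * a + v * b = 1"
proof -
  have "gcd a b = 1" using assms by (metis coprime_iff_gcd_eq_1)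
  thus ?thesis using bezout_int[of a b] by metis
qed

end

locale qfK = qf +
  fixes K :: int
  assumes small: "\<And>q. prime q \<Longrightarrow> q \<le> K \<Longrightarrow> inert q \<or> (\<exists>r\<in>Rg. nrm r = q)"
    and bnd: "2 * sqrt (nn d) + tt d < K + 1"
begin

lemma KL:
  assumes pp: "prime p" and a: "a \<in> Rg" and pa: "p dvd nrm a" and npa: "\<not> (of_int p \<preceq> a)"
  shows "\<exists>r\<in>Rg. nrm r = p"
proof (cases "p \<le> K")
  case True
  from small[OF pp True] show ?thesis
  proof
    assume "inert p" thus ?thesis using a pa npa unfolding inert_def by blast
  qed
next
  case False
  hence pK: "K < p" by simp
  have p1: "p > 1" using pp prime_gt_1_int by auto
  have anz: "a \<noteq> 0" using npa dv_0 by auto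
  define P where "P = (\<lambda>x. x \<in> Ig a p \<and> x \<noteq> 0)"
  have "P a" unfolding P_def using Ig_a anz by auto
  then obtain g where g: "P g" and gmin: "\<And>y. P y \<Longrightarrow> nat (nrm g) \<le> nat (nrm y)"
    using ex_has_least_nat[of P a "\<lambda>x. nat (nrm x)"] by blast
  have gI: "g \<in> Ig a p" and gnz: "g \<noteq> 0" using g unfolding P_def by auto
  have gR: "g \<in> Rg" using Ig_sub[OF a gI] .
  have gmin': "nrm g \<le> nrm y" if "y \<in> Ig a p" "y \<noteq> 0" for y
  proof -
    have "nat (nrm g) \<le> nat (nrm y)" using gmin[of y] that unfolding P_def by auto
    moreover have "nrm y \<ge> 0" using nrm_nonneg[OF Ig_sub[OF a that(1)]] .
    ultimately show ?thesis by linarith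
  qed
  have pg: "p dvd nrm g" using Ig_nrm[OF a pa gI] .
  then obtain k where k: "nrm g = p * k" by auto
  have gpos: "nrm g > 0" using nrm_nonneg[OF gR] nrm_zero_iff[OF gR] gnz by linarith
  hence "0 < p * k" using k by simp
  hence "0 < k" using p1 by (simp add: zero_less_mult_iff)
  hence k1: "k \<ge> 1" by simp
  obtain x where x: "x \<in> Ig a p" "x \<noteq> 0" "real_of_int (nrm x) \<le> (2 * sqrt (nn d) + tt d) * p"
    using thue[OF a pp pa npa] by blast
  have "real_of_int (nrm g) \<le> real_of_int (nrm x)" using gmin'[OF x(1,2)] by simp
  also have "\<dots> < (real_of_int K + 1) * real_of_int p"
  proof -
    have "(2 * sqrt (nn d) + tt d) * real_of_int p < (real_of_int K + 1) * real_of_int p"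
      using bnd p1 by (intro mult_strict_right_mono) auto
    thus ?thesis using x(3) by linarith
  qed
  finally have "real_of_int (p * k) < real_of_int ((K + 1) * p)" using k by simp
  hence "p * k < (K + 1) * p" using of_int_less_iff by blast
  hence kK: "k \<le> K" using p1 by (simp add: mult.commute)
  show ?thesis
  proof (cases "k = 1")
    case True thus ?thesis using k gR by auto
  next
    case False
    hence k2: "k \<ge> 2" using k1 by simp
    obtain q where q: "q dvd k" "prime q" using prime_divisor_exists[of k] k2 by auto
    have qk: "q \<le> k" using q k2 by (simp add: zdvd_imp_le)
    have qp: "q \<noteq> p" using qk kK pK by simp
    have cqp: "coprime q p" using primes_coprime[OF q(2) pp qp] .
    have qg: "q dvd nrm g" using q(1) k by simp
    have "\<exists>s\<in>Rg. s \<preceq> g \<and> nrm s > 1 \<and> coprime (nrm s) p"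
    proof -
      have q1: "q > 1" using q(2) prime_gt_1_int by auto
      from small[OF q(2) order_trans[OF qk kK]] show ?thesis
      proof
        assume "inert q"
        hence "of_int q \<preceq> g" using qg gR unfolding inert_def by blast
        moreover have "nrm (of_int q) > 1" using q1 one_less_power[of q 2] by simp
        moreover have "coprime (nrm (of_int q)) p" using cqp by simp
        ultimately show ?thesis by (intro bexI[of _ "of_int q"]) auto
      next
        assume "\<exists>r\<in>Rg. nrm r = q"
        then obtain r where r: "r \<in> Rg" "nrm r = q" by blast
        have opr: "oprime r" using prime_norm_oprime[OF r q(2)] .
        have "r \<preceq> of_int q" unfolding odvd_def using nrm_eq[OF r(1)] r by (auto intro!: bexI[of _ "cnj r"])
        moreover have "of_int q \<preceq> g * cnj g"
          using nrm_eq[OF gR] qg int_dv_int by simp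
        ultimately have "r \<preceq> g * cnj g" using dv_trans by blast
        hence "r \<preceq> g \<or> r \<preceq> cnj g" using opr gR unfolding oprime_def by auto
        thus ?thesis
        proof
          assume "r \<preceq> g" thus ?thesis using r q1 cqp by (intro bexI[of _ r]) auto
        next
          assume "r \<preceq> cnj g"
          hence "cnj r \<preceq> g" using dv_cnj[of r "cnj g"] by simp
          thus ?thesis using r q1 cqp by (intro bexI[of _ "cnj r"]) (auto simp: nrm_cnj)
        qed
      qed
    qed
    then obtain s where s: "s \<in> Rg" "s \<preceq> g" "nrm s > 1" "coprime (nrm s) p" by blast
    have snz: "s \<noteq> 0" using s(3) by (metis nrm_0 not_less_iff_gr_or_eq zero_less_one)
    define g' where "g' = g / s"
    have g'R: "g' \<in> Rg" and gg': "g = s * g'" using dv_div[OF s(2) snz] g'_def by auto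
    have g'nz: "g' \<noteq> 0" using gnz gg' by auto
    have ng: "nrm g = nrm s * nrm g'" using gg' nrm_mult s(1) g'R by simp
    have "nrm g' > 0" using nrm_nonneg[OF g'R] nrm_zero_iff[OF g'R] g'nz by linarith
    hence "1 * nrm g' < nrm s * nrm g'" using s(3) by (intro mult_strict_right_mono) auto
    hence lt: "nrm g' < nrm g" using ng by simp
    obtain u v where uv: "u * nrm s + v * p = 1" using coprime_bezout_int[OF s(4)] by blast
    have "g' = of_int u * (cnj s * g) + of_int p * (of_int v * g')"
    proof -
      have "(of_int u * of_int (nrm s) + of_int v * of_int p :: complex) = 1" using uv by (metis of_int_1 of_int_add of_int_mult)
      hence "g' = (of_int u * of_int (nrm s) + of_int v * of_int p) * g'" by simp
      also have "\<dots> = of_int u * (of_int (nrm s) * g') + of_int p * (of_int v * g')" by (simp add: algebra_simps)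
      also have "of_int (nrm s) * g' = cnj s * g" unfolding gg' using nrm_eq[OF s(1)] by (simp add: algebra_simps)
      finally show ?thesis .
    qed
    moreover have "of_int u * (cnj s * g) \<in> Ig a p" using Ig_mult[OF Ig_mult[OF gI] ] s(1) by simp
    moreover have "of_int p * (of_int v * g') \<in> Ig a p" using Ig_p g'R by simp
    ultimately have "g' \<in> Ig a p" using Ig_add[of "of_int u * (cnj s * g)" a p "of_int p * (of_int v * g')"] by simp
    hence "nrm g \<le> nrm g'" using gmin' g'nz by blast
    thus ?thesis using lt by simp
  qed
qed

end


context qf begin

lemma oprime_Rg: "oprime r \<Longrightarrow> r \<in> Rg" unfolding oprime_def by auto

lemma F0:
  assumes r: "oprime r"
  shows "x \<in> Rg \<Longrightarrow> W \<in> Rg \<Longrightarrow> x \<preceq> r ^ e * W \<Longrightarrow> \<exists>j\<le>e. \<exists>x'\<in>Rg. x = r ^ j * x' \<and> x' \<preceq> W"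
proof (induction e arbitrary: x)
  case 0
  thus ?case by auto
next
  case (Suc e)
  have rR: "r \<in> Rg" and rnz: "r \<noteq> 0" using r unfolding oprime_def by auto
  have eq: "r ^ Suc e * W = r * (r ^ e * W)" by simp
  show ?case
  proof (cases "r \<preceq> x")
    case True
    define x1 where "x1 = x / r"
    have x1: "x1 \<in> Rg" "x = r * x1" using dv_div[OF True rnz] x1_def by auto
    have "r * x1 \<preceq> r * (r ^ e * W)" using Suc.prems(3) eq x1 by (simp add: mult.assoc)
    hence "x1 \<preceq> r ^ e * W" using dv_cancel rnz by blast
    then obtain j x' where j: "j \<le> e" "x' \<in> Rg" "x1 = r ^ j * x'" "x' \<preceq> W" using Suc.IH[OF x1(1) Suc.prems(2)] by blast
    have "x = r ^ Suc j * x'" using x1 j by simp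
    thus ?thesis using j by (intro exI[of _ "Suc j"]) auto
  next
    case False
    obtain y where y0: "y \<in> Rg" "r ^ Suc e * W = x * y" using Suc.prems(3) unfolding odvd_def by blast
    hence y: "y \<in> Rg" "r * (r ^ e * W) = x * y" using eq by auto
    have "r \<preceq> x * y" unfolding y(2)[symmetric] using rR Suc.prems(2) by (intro dv_times) auto
    hence "r \<preceq> y" using r False Suc.prems(1) y(1) unfolding oprime_def by blast
    then obtain y' where y': "y' \<in> Rg" "y = r * y'" unfolding odvd_def by auto
    have "r * (r ^ e * W) = r * (x * y')" using y y' by (simp add: algebra_simps)
    hence "r ^ e * W = x * y'" using rnz by simp
    hence "x \<preceq> r ^ e * W" unfolding odvd_def using y' by auto
    then obtain j x' where j: "j \<le> e" "x' \<in> Rg" "x = r ^ j * x'" "x' \<preceq> W" using Suc.IH[OF Suc.prems(1,2)] by blast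
    thus ?thesis by (intro exI[of _ j]) auto
  qed
qed

lemma F1:
  assumes fin: "finite P" and pr: "\<And>i. i \<in> P \<Longrightarrow> oprime (f i)"
  shows "x \<in> Rg \<Longrightarrow> x \<preceq> (\<Prod>i\<in>P. f i ^ e i) \<Longrightarrow>
    \<exists>v g. ounit d v \<and> (\<forall>i\<in>P. g i \<le> e i) \<and> x = v * (\<Prod>i\<in>P. f i ^ g i)"
  using fin pr
proof (induction P arbitrary: x rule: finite_induct)
  case empty
  thus ?case using dv_unit by (intro exI[of _ x]) auto
next
  case (insert i P)
  have fi: "oprime (f i)" using insert.prems by auto
  have WR: "(\<Prod>i\<in>P. f i ^ e i) \<in> Rg" using insert.prems oprime_Rg by auto
  have "x \<preceq> f i ^ e i * (\<Prod>i\<in>P. f i ^ e i)" using insert by simp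
  then obtain j x' where j: "j \<le> e i" "x' \<in> Rg" "x = f i ^ j * x'" "x' \<preceq> (\<Prod>i\<in>P. f i ^ e i)"
    using F0[OF fi insert.prems(1) WR] by blast
  obtain v g where vg: "ounit d v" "\<forall>i\<in>P. g i \<le> e i" "x' = v * (\<Prod>i\<in>P. f i ^ g i)"
    using insert.IH[OF j(2) j(4)] insert.prems by blast
  define g' where "g' = g(i := j)"
  have "(\<Prod>i\<in>P. f i ^ g' i) = (\<Prod>i\<in>P. f i ^ g i)"
    using insert.hyps(2) unfolding g'_def by (intro prod.cong) auto
  hence "(\<Prod>i\<in>insert i P. f i ^ g' i) = f i ^ j * (\<Prod>i\<in>P. f i ^ g i)"
    using insert.hyps unfolding g'_def by simp
  hence "x = v * (\<Prod>i\<in>insert i P. f i ^ g' i)" using j vg by (simp add: algebra_simps)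
  moreover have "\<forall>k\<in>insert i P. g' k \<le> e k" using vg j unfolding g'_def by auto
  ultimately show ?case using vg by blast
qed

lemma F2:
  assumes fin: "finite P" and pr: "\<And>i. i \<in> P \<Longrightarrow> oprime (f i)"
    and u: "ounit d u" and v: "ounit d v" and ge: "\<forall>i\<in>P. g i \<le> e i"
    and x: "x = v * (\<Prod>i\<in>P. f i ^ g i)" and Z: "Z = u * (\<Prod>i\<in>P. f i ^ e i)"
    and cop: "orel_prime d x (Z / x)" and i: "i \<in> P"
  shows "g i = 0 \<or> g i = e i"
proof (rule ccontr)
  assume "\<not> (g i = 0 \<or> g i = e i)"
  hence gi: "0 < g i" "g i < e i" using ge i by auto
  have fR: "\<And>k. k \<in> P \<Longrightarrow> f k \<in> Rg" using pr oprime_Rg by blast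
  have fnz: "\<And>k. k \<in> P \<Longrightarrow> f k \<noteq> 0" using pr unfolding oprime_def by blast
  have pnz: "(\<Prod>k\<in>P. f k ^ g k) \<noteq> 0" using fnz fin by (simp add: prod_zero_iff)
  have vnz: "v \<noteq> 0" using unit_nz[OF v] .
  have split: "(\<Prod>k\<in>P. f k ^ e k) = (\<Prod>k\<in>P. f k ^ g k) * (\<Prod>k\<in>P. f k ^ (e k - g k))"
    unfolding prod.distrib[symmetric] by (rule prod.cong) (use ge in \<open>auto simp: power_add[symmetric]\<close>)
  have Zx: "Z / x = (u * (1 / v)) * (\<Prod>k\<in>P. f k ^ (e k - g k))"
    unfolding Z x split using pnz vnz by (simp add: field_simps)
  have dx: "f i \<preceq> x"
  proof -
    have "(\<Prod>k\<in>P. f k ^ g k) = f i ^ g i * (\<Prod>k\<in>P - {i}. f k ^ g k)" using fin i by (simp add: prod.remove)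
    also have "f i ^ g i = f i * f i ^ (g i - 1)" using gi power_Suc[of "f i" "g i - 1"] by simp
    finally have "x = f i * (v * f i ^ (g i - 1) * (\<Prod>k\<in>P - {i}. f k ^ g k))" using x by (simp add: algebra_simps)
    moreover have "v * f i ^ (g i - 1) * (\<Prod>k\<in>P - {i}. f k ^ g k) \<in> Rg"
      using v fR i unfolding unit_iff by (auto intro!: Od_mult Od_power Od_prod)
    ultimately show ?thesis unfolding odvd_def by blast
  qed
  have dy: "f i \<preceq> Z / x"
  proof -
    have "(\<Prod>k\<in>P. f k ^ (e k - g k)) = f i ^ (e i - g i) * (\<Prod>k\<in>P - {i}. f k ^ (e k - g k))" using fin i by (simp add: prod.remove)
    also have "f i ^ (e i - g i) = f i * f i ^ (e i - g i - 1)"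
    proof -
      have "e i - g i = Suc (e i - g i - 1)" using gi by simp
      thus ?thesis by (metis power_Suc)
    qed
    finally have "Z / x = f i * ((u * (1 / v)) * f i ^ (e i - g i - 1) * (\<Prod>k\<in>P - {i}. f k ^ (e k - g k)))" using Zx by (simp add: algebra_simps)
    moreover have "(u * (1 / v)) * f i ^ (e i - g i - 1) * (\<Prod>k\<in>P - {i}. f k ^ (e k - g k)) \<in> Rg"
      using u unit_inv[OF v] fR i unfolding unit_iff by (auto intro!: Od_mult Od_power Od_prod)
    ultimately show ?thesis unfolding odvd_def by blast
  qed
  have "ounit d (f i)" using cop dx dy fR[OF i] unfolding orel_prime_def by blast
  thus False using pr[OF i] unfolding oprime_def by blast
qed

end

context qfK begin

lemma inert_prime:
  assumes pp: "prime p" and nr: "\<not> (\<exists>r\<in>Rg. nrm r = p)"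
  shows "oprime (of_int p)"
proof -
  have p1: "p > 1" using pp prime_gt_1_int by auto
  have "p^2 > 1" using p1 one_less_power[of p 2] by simp
  hence "p^2 \<noteq> 1" by simp
  hence "\<not> ounit d (of_int p)" unfolding unit_iff by simp
  moreover have "of_int p \<preceq> a \<or> of_int p \<preceq> b" if ab: "a \<in> Rg" "b \<in> Rg" "of_int p \<preceq> a * b" for a b
  proof -
    have "nrm (of_int p) dvd nrm (a * b)" using dv_nrm[OF _ ab(3)] by simp
    hence "p * p dvd nrm a * nrm b" using nrm_mult ab by (simp add: power2_eq_square)
    hence "p dvd nrm a * nrm b" using dvd_mult_left by blast
    hence "p dvd nrm a \<or> p dvd nrm b" using pp prime_dvd_mult_int by blast
    thus ?thesis using KL[OF pp] nr ab by blast
  qed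
  ultimately show ?thesis unfolding oprime_def using p1 by auto
qed

definition hasn :: "int \<Rightarrow> bool" where "hasn p \<longleftrightarrow> (\<exists>r\<in>Rg. nrm r = p)"
definition rho :: "int \<Rightarrow> complex" where
  "rho p = (if hasn p then (SOME r. r \<in> Rg \<and> nrm r = p) else of_int p)"
definition ee :: "int \<Rightarrow> nat" where "ee p = (if hasn p then 2 else 1)"

lemma rho_prop: assumes pp: "prime p"
  shows "oprime (rho p)" "cmod (rho p ^ ee p) = p" "nrm (rho p) = p \<or> nrm (rho p) = p^2"
proof -
  have p1: "p > 1" using pp prime_gt_1_int by auto
  have "oprime (rho p) \<and> cmod (rho p ^ ee p) = p \<and> (nrm (rho p) = p \<or> nrm (rho p) = p^2)"
  proof (cases "hasn p")
    case True
    hence "\<exists>r. r \<in> Rg \<and> nrm r = p" unfolding hasn_def by blast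
    hence "(SOME r. r \<in> Rg \<and> nrm r = p) \<in> Rg \<and> nrm (SOME r. r \<in> Rg \<and> nrm r = p) = p"
      by (rule someI_ex)
    hence r: "rho p \<in> Rg" "nrm (rho p) = p" unfolding rho_def using True by auto
    have "(cmod (rho p))^2 = p" using nrm_cmod[OF r(1)] r(2) by simp
    moreover have "cmod (rho p ^ ee p) = (cmod (rho p))^2" using True unfolding ee_def by (simp add: norm_power)
    ultimately have "cmod (rho p ^ ee p) = p" by simp
    thus ?thesis using prime_norm_oprime[OF r pp] r by auto
  next
    case False
    hence "rho p = of_int p" "ee p = 1" unfolding rho_def ee_def by auto
    thus ?thesis using inert_prime[OF pp] False p1 unfolding hasn_def by auto
  qed
  thus "oprime (rho p)" "cmod (rho p ^ ee p) = p" "nrm (rho p) = p \<or> nrm (rho p) = p^2" by auto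
qed

end


locale qfM = qfK +
  assumes N1: "\<And>z. z \<in> Rg \<Longrightarrow> z \<noteq> 0 \<Longrightarrow> \<exists>u. ounit d u \<and> u * z \<in> Aset d"
    and N2: "\<And>x u. x \<in> Aset d \<Longrightarrow> ounit d u \<Longrightarrow> u * x \<in> Aset d \<Longrightarrow> u = 1"
begin

definition rr :: "nat \<Rightarrow> complex" where "rr p = rho (int p) ^ ee (int p)"
definition zz :: "nat \<Rightarrow> complex" where "zz m = (\<Prod>p\<in>prime_factors m. rr p ^ multiplicity p m)"
definition norml :: "complex \<Rightarrow> complex" where "norml z = (SOME u. ounit d u \<and> u * z \<in> Aset d) * z"

lemma Aset_Rg: "x \<in> Aset d \<Longrightarrow> x \<in> Rg" unfolding Aset_def by auto
lemma Aset_nz: "x \<in> Aset d \<Longrightarrow> x \<noteq> 0" unfolding Aset_def by auto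

lemma norml_prop: assumes "z \<in> Rg" "z \<noteq> 0"
  shows "\<exists>u. ounit d u \<and> norml z = u * z \<and> norml z \<in> Aset d"
proof -
  have "\<exists>u. ounit d u \<and> u * z \<in> Aset d" using N1[OF assms] .
  hence "ounit d (SOME u. ounit d u \<and> u * z \<in> Aset d) \<and> (SOME u. ounit d u \<and> u * z \<in> Aset d) * z \<in> Aset d"
    by (rule someI_ex)
  thus ?thesis unfolding norml_def by blast
qed

lemma rr_Rg: "prime p \<Longrightarrow> rr p \<in> Rg"
  unfolding rr_def using rho_prop[of "int p"] oprime_Rg by auto

lemma rr_cmod: "prime p \<Longrightarrow> cmod (rr p) = p"
  unfolding rr_def using rho_prop[of "int p"] by auto

lemma zz_super:
  assumes Q: "finite Q" "prime_factors m \<subseteq> Q" "\<And>p. p \<in> Q \<Longrightarrow> prime p" and m: "m > 0"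
  shows "zz m = (\<Prod>p\<in>Q. rr p ^ multiplicity p m)"
  unfolding zz_def
proof (rule prod.mono_neutral_left[OF Q(1) Q(2)])
  show "\<forall>i\<in>Q - prime_factors m. rr i ^ multiplicity i m = 1"
  proof
    fix i assume i: "i \<in> Q - prime_factors m"
    hence "\<not> i dvd m" using Q(3) m by (auto simp: in_prime_factors_iff)
    hence "multiplicity i m = 0" by (rule not_dvd_imp_multiplicity_0)
    thus "rr i ^ multiplicity i m = 1" by simp
  qed
qed

lemma zz_Rg: "zz m \<in> Rg" unfolding zz_def using rr_Rg by (auto intro!: Od_prod Od_power simp: in_prime_factors_iff)

lemma zz_cmod: assumes "m > 0" shows "cmod (zz m) = m"
proof -
  have "cmod (zz m) = (\<Prod>p\<in>prime_factors m. cmod (rr p) ^ multiplicity p m)"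
    unfolding zz_def by (simp add: prod_norm[symmetric] norm_power)
  also have "\<dots> = (\<Prod>p\<in>prime_factors m. real p ^ multiplicity p m)"
    by (rule prod.cong) (auto simp: rr_cmod in_prime_factors_iff)
  also have "\<dots> = real (\<Prod>p\<in>prime_factors m. p ^ multiplicity p m)" by simp
  also have "(\<Prod>p\<in>prime_factors m. p ^ multiplicity p m) = m" using assms prod_prime_factors[of m] by simp
  finally show ?thesis .
qed

lemma zz_nz: assumes "m > 0" shows "zz m \<noteq> 0"
proof
  assume "zz m = 0"
  hence "cmod (zz m) = 0" by simp
  thus False using zz_cmod[OF assms] assms by simp
qed

lemma zz_nrm: assumes "m > 0" shows "nrm (zz m) = int m ^ 2"
proof -
  have "real_of_int (nrm (zz m)) = (real m)^2" using nrm_cmod[OF zz_Rg] zz_cmod[OF assms] by simp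
  also have "(real m)^2 = real_of_int (int m ^ 2)" by simp
  finally show ?thesis by (simp only: of_int_eq_iff)
qed

lemma zz_mult: assumes a: "a > 0" and b: "b > 0" shows "zz (a * b) = zz a * zz b"
proof -
  define Q where "Q = prime_factors a \<union> prime_factors b"
  have Q: "finite Q" "\<And>p. p \<in> Q \<Longrightarrow> prime p" unfolding Q_def by auto
  have "prime_factors (a * b) = Q" unfolding Q_def using a b by (simp add: prime_factors_product)
  hence "zz (a * b) = (\<Prod>p\<in>Q. rr p ^ multiplicity p (a * b))" using zz_super[OF Q(1) _ Q(2)] a b by simp
  also have "\<dots> = (\<Prod>p\<in>Q. rr p ^ multiplicity p a * rr p ^ multiplicity p b)"
    by (rule prod.cong) (use a b Q(2) in \<open>auto simp: prime_elem_multiplicity_mult_distrib power_add\<close>)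
  also have "\<dots> = (\<Prod>p\<in>Q. rr p ^ multiplicity p a) * (\<Prod>p\<in>Q. rr p ^ multiplicity p b)" by (rule prod.distrib)
  also have "(\<Prod>p\<in>Q. rr p ^ multiplicity p a) = zz a" using zz_super[OF Q(1) _ Q(2) a] unfolding Q_def by auto
  also have "(\<Prod>p\<in>Q. rr p ^ multiplicity p b) = zz b" using zz_super[OF Q(1) _ Q(2) b] unfolding Q_def by auto
  finally show ?thesis .
qed

lemma unit_cnj_mult: "ounit d v \<Longrightarrow> v * cnj v = 1"
  using nrm_eq unfolding unit_iff by auto

lemma claimB:
  assumes n: "n > 0" and c: "c dvd n" "coprime c (n div c)"
  shows "diamond d (norml (zz c)) (norml (zz n))"
proof -
  define m where "m = n div c"
  have cpos: "c > 0" using dvd_pos_nat[OF n c(1)] .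
  have nm: "n = c * m" using c unfolding m_def by simp
  have mpos: "m > 0" using n nm by simp
  have cop: "coprime c m" using c m_def by simp
  obtain v where v: "ounit d v" "norml (zz c) = v * zz c" "norml (zz c) \<in> Aset d"
    using norml_prop[OF zz_Rg zz_nz[OF cpos]] by blast
  obtain u where u: "ounit d u" "norml (zz n) = u * zz n" "norml (zz n) \<in> Aset d"
    using norml_prop[OF zz_Rg zz_nz[OF n]] by blast
  define x where "x = norml (zz c)"
  define y where "y = u * cnj v * zz m"
  have yR: "y \<in> Rg" unfolding y_def using u v zz_Rg unfolding unit_iff by auto
  have xnz: "x \<noteq> 0" using Aset_nz[OF v(3)] x_def by simp
  have Zxy: "norml (zz n) = x * y"
  proof -
    have "norml (zz n) = u * (zz c * zz m)" using u nm zz_mult[OF cpos mpos] by simp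
    also have "\<dots> = (v * cnj v) * (u * (zz c * zz m))" using unit_cnj_mult[OF v(1)] by simp
    also have "\<dots> = (v * zz c) * (u * cnj v * zz m)" by (simp add: algebra_simps)
    finally show ?thesis unfolding x_def y_def using v by simp
  qed
  have dvx: "odvd d x (norml (zz n))" unfolding odvd_def using Zxy yR by blast
  have div: "norml (zz n) / x = y" using Zxy xnz by simp
  have nx: "nrm x = int c ^ 2" unfolding x_def v(2) using v(1) zz_nrm[OF cpos] zz_Rg
    unfolding unit_iff by (simp add: nrm_mult)
  have ny: "nrm y = int m ^ 2"
  proof -
    have "nrm y = nrm u * nrm (cnj v) * nrm (zz m)" unfolding y_def using u v zz_Rg unfolding unit_iff by (simp add: nrm_mult)
    thus ?thesis using u v zz_nrm[OF mpos] unfolding unit_iff by (simp add: nrm_cnj)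
  qed
  have "orel_prime d x y"
    unfolding orel_prime_def
  proof (intro ballI impI)
    fix c' assume c': "c' \<in> Rg" "odvd d c' x \<and> odvd d c' y"
    have "nrm c' dvd nrm x" "nrm c' dvd nrm y" using dv_nrm[OF c'(1)] c'(2) by blast+
    hence "nrm c' dvd int c ^ 2" "nrm c' dvd int m ^ 2" using nx ny by simp_all
    moreover have "coprime (int c ^ 2) (int m ^ 2)" using cop by simp
    ultimately have "\<bar>nrm c'\<bar> = 1" using coprime_common_divisor_int by blast
    thus "ounit d c'" using nrm_nonneg[OF c'(1)] c'(1) unfolding unit_iff by simp
  qed
  thus ?thesis unfolding diamond_def using v(3) dvx div x_def by simp
qed


lemma unit_cmod: assumes "ounit d v" shows "cmod v = 1"
proof -
  have "(cmod v)^2 = 1" using nrm_cmod[of v] assms unfolding unit_iff by simp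
  hence "cmod v = 1 \<or> cmod v = -1" by (simp add: power2_eq_1_iff)
  thus ?thesis using norm_ge_zero[of v] by linarith
qed

lemma cmod_norml: assumes "m > 0" shows "cmod (norml (zz m)) = m"
proof -
  obtain v where v: "ounit d v" "norml (zz m) = v * zz m"
    using norml_prop[OF zz_Rg zz_nz[OF assms]] by blast
  thus ?thesis using unit_cmod[OF v(1)] zz_cmod[OF assms] by (simp add: norm_mult)
qed

lemma claimA:
  assumes n: "n > 0" and x: "diamond d x (norml (zz n))"
  shows "\<exists>c. c dvd n \<and> coprime c (n div c) \<and> x = norml (zz c)"
proof -
  obtain u where u: "ounit d u" "norml (zz n) = u * zz n" "norml (zz n) \<in> Aset d"
    using norml_prop[OF zz_Rg zz_nz[OF n]] by blast
  define Z where "Z = norml (zz n)"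
  have xA: "x \<in> Aset d" and xZ: "odvd d x Z" and cop: "orel_prime d x (Z / x)"
    using x unfolding diamond_def Z_def by auto
  have xR: "x \<in> Rg" using Aset_Rg[OF xA] .
  define P where "P = prime_factors n"
  define f where "f = (\<lambda>p::nat. rho (int p))"
  define e where "e = (\<lambda>p::nat. ee (int p) * multiplicity p n)"
  have finP: "finite P" unfolding P_def by simp
  have primeP: "\<And>p. p \<in> P \<Longrightarrow> prime p" unfolding P_def by auto
  have fpr: "\<And>p. p \<in> P \<Longrightarrow> oprime (f p)" unfolding f_def using rho_prop primeP by simp
  have zzn: "zz n = (\<Prod>p\<in>P. f p ^ e p)"
    unfolding zz_def rr_def P_def f_def e_def by (simp add: power_mult)
  have Zu: "Z = u * (\<Prod>p\<in>P. f p ^ e p)" using u Z_def zzn by simp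
  have "zz n = cnj u * Z" using Zu zzn unit_cnj_mult[OF u(1)] by (simp add: algebra_simps)
  hence "odvd d x (\<Prod>p\<in>P. f p ^ e p)" using dv_mult_left[OF xZ, of "cnj u"] u(1) zzn unfolding unit_iff by simp
  then obtain v g where vg: "ounit d v" "\<forall>p\<in>P. g p \<le> e p" "x = v * (\<Prod>p\<in>P. f p ^ g p)"
    using F1[where f=f and e=e, OF finP fpr xR] by blast
  have g01: "\<And>p. p \<in> P \<Longrightarrow> g p = 0 \<or> g p = e p"
    using F2[where f=f, OF finP fpr u(1) vg(1) vg(2) vg(3) Zu] cop by blast
  define S where "S = {p\<in>P. g p \<noteq> 0}"
  have finS: "finite S" "\<And>p. p \<in> S \<Longrightarrow> prime p" "S \<subseteq> P" using finP primeP unfolding S_def by auto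
  define c where "c = (\<Prod>p\<in>S. p ^ multiplicity p n)"
  have multc: "\<And>p. prime p \<Longrightarrow> multiplicity p c = (if p \<in> S then multiplicity p n else 0)"
    unfolding c_def by (rule multiplicity_prod_prime_powers) (use finS in auto)
  have cpos: "c > 0" unfolding c_def using finS by (auto intro!: prod_pos simp: prime_gt_0_nat)
  have cn: "c dvd n"
  proof (rule multiplicity_le_imp_dvd)
    show "c \<noteq> 0" using cpos by simp
    fix p :: nat assume "prime p" thus "multiplicity p c \<le> multiplicity p n" using multc by simp
  qed
  define m where "m = n div c"
  have nm: "n = c * m" using cn unfolding m_def by simp
  have mpos: "m > 0" using nm n by (metis gr0I mult_0_right less_irrefl)
  have copc: "coprime c m"
  proof (rule ccontr)
    assume nc: "\<not> coprime c m"
    have "gcd c m \<noteq> 0" using cpos by simp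
    moreover have "\<not> is_unit (gcd c m)" using nc by (simp add: coprime_iff_gcd_eq_1)
    ultimately obtain q where q: "q dvd gcd c m" "prime q" using prime_divisor_exists by blast
    have qc: "q dvd c" and qm: "q dvd m" using q(1) by auto
    have "multiplicity q c > 0" using qc cpos q(2) by (simp add: prime_multiplicity_gt_zero_iff)
    hence "q \<in> S" and mq: "multiplicity q c = multiplicity q n" using multc[OF q(2)] by (auto split: if_splits)
    have "multiplicity q n = multiplicity q c + multiplicity q m"
      using nm cpos mpos q(2) by (simp add: prime_elem_multiplicity_mult_distrib)
    hence "multiplicity q m = 0" using mq by simp
    moreover have "multiplicity q m > 0" using qm mpos q(2) by (simp add: prime_multiplicity_gt_zero_iff)
    ultimately show False by simp
  qed
  have pfc: "prime_factors c \<subseteq> P"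
  proof
    fix p assume p: "p \<in> prime_factors c"
    hence pp: "prime p" "p dvd c" by (auto simp: in_prime_factors_iff)
    hence "multiplicity p c > 0" using cpos by (simp add: prime_multiplicity_gt_zero_iff)
    hence "p \<in> S" using multc[OF pp(1)] by (auto split: if_splits)
    thus "p \<in> P" using finS by auto
  qed
  have "zz c = (\<Prod>p\<in>P. rr p ^ multiplicity p c)" using zz_super[OF finP pfc primeP cpos] .
  also have "\<dots> = (\<Prod>p\<in>P. f p ^ g p)"
  proof (rule prod.cong[OF refl])
    fix p assume p: "p \<in> P"
    have "ee (int p) * multiplicity p c = g p"
    proof (cases "p \<in> S")
      case True
      hence "g p = e p" using g01[OF p] unfolding S_def by auto
      thus ?thesis using True multc[OF primeP[OF p]] unfolding e_def by simp
    next
      case False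
      hence "g p = 0" using p unfolding S_def by auto
      thus ?thesis using False multc[OF primeP[OF p]] by simp
    qed
    thus "rr p ^ multiplicity p c = f p ^ g p" unfolding rr_def f_def by (simp add: power_mult[symmetric])
  qed
  finally have xv: "x = v * zz c" using vg(3) by simp
  obtain v' where v': "ounit d v'" "norml (zz c) = v' * zz c" "norml (zz c) \<in> Aset d"
    using norml_prop[OF zz_Rg zz_nz[OF cpos]] by blast
  have "x = (v * cnj v') * norml (zz c)"
  proof -
    have "(v * cnj v') * norml (zz c) = v * (v' * cnj v') * zz c" using v'(2) by (simp add: algebra_simps)
    also have "\<dots> = v * zz c" using unit_cnj_mult[OF v'(1)] by simp
    finally have h: "(v * cnj v') * norml (zz c) = v * zz c" .
    show ?thesis unfolding xv h[symmetric] ..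
  qed
  moreover have "ounit d (v * cnj v')" using unit_mult[OF vg(1)] unit_inv[OF v'(1)] by auto
  ultimately have "v * cnj v' = 1" using N2[OF v'(3)] xA by auto
  hence "x = norml (zz c)" using \<open>x = (v * cnj v') * norml (zz c)\<close> by simp
  thus ?thesis using cn copc unfolding m_def by blast
qed

lemma delta_eq: assumes n: "n > 0"
  shows "delta1_star d (norml (zz n)) = real (sigma_star n)"
proof -
  define S where "S = {x. diamond d x (norml (zz n))}"
  define T where "T = {c. c dvd n \<and> coprime c (n div c)}"
  have Tpos: "\<And>c. c \<in> T \<Longrightarrow> c > 0" unfolding T_def using n dvd_pos_nat by blast
  have "delta1_star d (norml (zz n)) = (\<Sum>x\<in>S. cmod x)" unfolding delta1_star_def S_def by simp
  also have "\<dots> = (\<Sum>c\<in>T. real c)"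
  proof (rule sum.reindex_bij_witness[where i = "\<lambda>c. norml (zz c)" and j = "\<lambda>x. nat \<lfloor>cmod x\<rfloor>"])
    fix a assume a: "a \<in> S"
    then obtain c where c: "c \<in> T" "a = norml (zz c)" using claimA[OF n] unfolding S_def T_def by blast
    have ca: "cmod a = real c" using c cmod_norml[OF Tpos[OF c(1)]] by simp
    show "norml (zz (nat \<lfloor>cmod a\<rfloor>)) = a" using ca c by simp
    show "nat \<lfloor>cmod a\<rfloor> \<in> T" using ca c by simp
    show "real (nat \<lfloor>cmod a\<rfloor>) = cmod a" using ca by simp
  next
    fix b assume b: "b \<in> T"
    show "nat \<lfloor>cmod (norml (zz b))\<rfloor> = b" using cmod_norml[OF Tpos[OF b]] by simp
    show "norml (zz b) \<in> S" using claimB[OF n] b unfolding S_def T_def by blast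
  qed
  also have "\<dots> = real (sigma_star n)" unfolding sigma_star_def T_def by simp
  finally show ?thesis .
qed

lemma main_qfM:
  fixes b :: rat
  shows "\<exists>g. (\<forall>n\<in>U_set b. g n \<in> V_set d b) \<and> inj_on g (U_set b)"
proof (intro exI conjI)
  show "\<forall>n\<in>U_set b. norml (zz n) \<in> V_set d b"
  proof
    fix n assume "n \<in> U_set b"
    hence n: "n > 0" "of_nat (sigma_star n) = b * of_nat n" unfolding U_set_def by auto
    have A: "norml (zz n) \<in> Aset d" using norml_prop[OF zz_Rg zz_nz[OF n(1)]] by blast
    have "b = of_nat (sigma_star n) / of_nat n" using n by simp
    hence "of_rat b = real (sigma_star n) / real n" by (simp add: of_rat_divide)
    also have "\<dots> = I1_star d (norml (zz n))" unfolding I1_star_def using delta_eq[OF n(1)] cmod_norml[OF n(1)] by simp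
    finally show "norml (zz n) \<in> V_set d b" unfolding V_set_def using A by simp
  qed
  show "inj_on (\<lambda>n. norml (zz n)) (U_set b)"
  proof (rule inj_onI)
    fix m n assume "m \<in> U_set b" "n \<in> U_set b" "norml (zz m) = norml (zz n)"
    thus "m = n" using cmod_norml unfolding U_set_def by (metis (mono_tags, lifting) mem_Collect_eq of_nat_eq_iff)
  qed
qed

end


lemma arg0_cases: assumes "z \<noteq> 0"
  shows "(Arg z < 0 \<and> arg0 z > pi \<and> Im z < 0) \<or> (Arg z \<ge> 0 \<and> arg0 z = Arg z \<and> Arg z \<le> pi \<and> Im z \<ge> 0)"
proof (cases "Arg z < 0")
  case True
  thus ?thesis using mpi_less_Arg[of z] Arg_neg_iff[of z] unfolding arg0_def by auto
next
  case False
  thus ?thesis using Arg_le_pi[of z] Arg_less_0[of z] unfolding arg0_def by auto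
qed

lemma arg0_pi: assumes "z \<noteq> 0"
  shows "arg0 z < pi \<longleftrightarrow> Im z > 0 \<or> (Im z = 0 \<and> Re z > 0)"
proof -
  have "Im z = 0 \<Longrightarrow> Re z \<noteq> 0" using assms complex_eq_iff by auto
  thus ?thesis using arg0_cases[OF assms] Arg_eq_pi[of z] by (auto simp: less_le)
qed

lemma arg0_half: assumes "z \<noteq> 0"
  shows "arg0 z < pi/2 \<longleftrightarrow> Re z > 0 \<and> Im z \<ge> 0"
proof -
  from arg0_cases[OF assms] show ?thesis
  proof
    assume "Arg z < 0 \<and> arg0 z > pi \<and> Im z < 0" thus ?thesis using pi_gt_zero by linarith
  next
    assume h: "Arg z \<ge> 0 \<and> arg0 z = Arg z \<and> Arg z \<le> pi \<and> Im z \<ge> 0"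
    have nz: "cmod z > 0" using assms by simp
    have c: "cos (Arg z) = Re z / cmod z" using cos_Arg[OF assms] .
    have "Arg z < pi/2 \<longleftrightarrow> cos (pi/2) < cos (Arg z)"
      using h by (subst cos_mono_less_eq) auto
    also have "\<dots> \<longleftrightarrow> Re z > 0" using c nz by (simp add: zero_less_divide_iff)
    finally show ?thesis using h by simp
  qed
qed

lemma arg0_third: assumes "z \<noteq> 0"
  shows "arg0 z < pi/3 \<longleftrightarrow> Im z \<ge> 0 \<and> Im z < sqrt 3 * Re z"
proof -
  from arg0_cases[OF assms] show ?thesis
  proof
    assume "Arg z < 0 \<and> arg0 z > pi \<and> Im z < 0" thus ?thesis using pi_gt_zero by linarith
  next
    assume h: "Arg z \<ge> 0 \<and> arg0 z = Arg z \<and> Arg z \<le> pi \<and> Im z \<ge> 0"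
    have nz: "cmod z > 0" using assms by simp
    have c: "cos (Arg z) = Re z / cmod z" using cos_Arg[OF assms] .
    have "Arg z < pi/3 \<longleftrightarrow> cos (pi/3) < cos (Arg z)"
      using h by (subst cos_mono_less_eq) auto
    also have "\<dots> \<longleftrightarrow> cmod z < 2 * Re z" unfolding cos_60 c using nz by (simp add: field_simps)
    also have "\<dots> \<longleftrightarrow> Im z < sqrt 3 * Re z"
    proof -
      have m: "cmod z = sqrt ((Re z)^2 + (Im z)^2)" by (simp add: cmod_def)
      have s3: "sqrt 3 * sqrt 3 = (3::real)" by simp
      show ?thesis
      proof
        assume a: "cmod z < 2 * Re z"
        hence rp: "Re z > 0" using nz by linarith
        have e: "sqrt ((2*Re z)^2) = 2*Re z" using rp by (simp only: real_sqrt_abs)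
        have "sqrt ((Re z)^2 + (Im z)^2) < sqrt ((2 * Re z)^2)" unfolding e using a unfolding m .
        hence "(Re z)^2 + (Im z)^2 < (2 * Re z)^2" by (simp only: real_sqrt_less_iff)
        hence "(Im z)^2 < (sqrt 3 * Re z)^2" using s3 by (simp add: power2_eq_square algebra_simps)
        moreover have "0 \<le> sqrt 3 * Re z" using rp by simp
        ultimately show "Im z < sqrt 3 * Re z" by (rule power_less_imp_less_base)
      next
        assume a: "Im z < sqrt 3 * Re z"
        hence "sqrt 3 * Re z > 0" using h by linarith
        hence rp: "Re z > 0" by (simp add: zero_less_mult_iff)
        have "(Im z)^2 < (sqrt 3 * Re z)^2" using a h by (intro power_strict_mono) auto
        hence "(Re z)^2 + (Im z)^2 < (2 * Re z)^2" using s3 by (simp add: power2_eq_square algebra_simps)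
        hence "sqrt ((Re z)^2 + (Im z)^2) < 2 * Re z" using rp by (intro real_less_lsqrt) auto
        thus "cmod z < 2 * Re z" using m by simp
      qed
    qed
    finally show ?thesis using h by simp
  qed
qed


lemma arg0_nonneg: "0 \<le> arg0 z"
proof (cases "Arg z < 0")
  case True
  hence "arg0 z = Arg z + 2 * pi" unfolding arg0_def by simp
  thus ?thesis using mpi_less_Arg[of z] pi_gt_zero by linarith
next
  case False
  thus ?thesis unfolding arg0_def by simp
qed

context qf begin

lemma Aset_gen: assumes "d \<noteq> -1" "d \<noteq> -3"
  shows "x \<in> Aset d \<longleftrightarrow> x \<in> Rg \<and> x \<noteq> 0 \<and> (Im x > 0 \<or> (Im x = 0 \<and> Re x > 0))"
proof -
  have "x \<in> Aset d \<longleftrightarrow> x \<in> Rg \<and> x \<noteq> 0 \<and> arg0 x < pi" unfolding Aset_def using assms arg0_nonneg by auto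
  thus ?thesis using arg0_pi[of x] by blast
qed

lemma Aset_m1: assumes "d = -1"
  shows "x \<in> Aset d \<longleftrightarrow> x \<in> Rg \<and> x \<noteq> 0 \<and> Re x > 0 \<and> Im x \<ge> 0"
proof -
  have "x \<in> Aset d \<longleftrightarrow> x \<in> Rg \<and> x \<noteq> 0 \<and> arg0 x < pi/2" unfolding Aset_def using assms arg0_nonneg by auto
  thus ?thesis using arg0_half[of x] by blast
qed

lemma Aset_m3: assumes "d = -3"
  shows "x \<in> Aset d \<longleftrightarrow> x \<in> Rg \<and> x \<noteq> 0 \<and> Im x \<ge> 0 \<and> Im x < sqrt 3 * Re x"
proof -
  have "x \<in> Aset d \<longleftrightarrow> x \<in> Rg \<and> x \<noteq> 0 \<and> arg0 x < pi/3" unfolding Aset_def using assms arg0_nonneg by auto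
  thus ?thesis using arg0_third[of x] by blast
qed

lemma unit_coord: "ounit d u \<Longrightarrow> \<exists>a b. u = of_int a + of_int b * w \<and> a^2 + tt d * a * b + nn d * b^2 = 1"
proof -
  assume "ounit d u"
  then obtain a b where "u = of_int a + of_int b * w" "nrm u = 1" unfolding unit_iff Od_iff by blast
  thus ?thesis using nrm_coord[of a b] by auto
qed

lemma four_norm: "4 * (a^2 + tt d * a * b + nn d * b^2) = (2*a + tt d * b)^2 + (4 * nn d - tt d) * b^2"
  using tt_cases by (auto simp: algebra_simps power2_eq_square)

lemma units_a: assumes n2: "nn d \<ge> 2" and u: "ounit d u" shows "u = 1 \<or> u = -1"
proof -
  obtain a b where ab: "u = of_int a + of_int b * w" "a^2 + tt d * a * b + nn d * b^2 = 1" using unit_coord[OF u] by blast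
  have e: "(2*a + tt d * b)^2 + (4 * nn d - tt d) * b^2 = 4" using four_norm[of a b] ab(2) by simp
  have b0: "b = 0"
  proof (rule ccontr)
    assume "b \<noteq> 0"
    hence "b^2 > 0" by simp
    hence "b^2 \<ge> 1" by linarith
    moreover have "4 * nn d - tt d \<ge> 7" using n2 tt_cases by auto
    ultimately have "7 * 1 \<le> (4 * nn d - tt d) * b^2" by (intro mult_mono) auto
    hence "(4 * nn d - tt d) * b^2 \<ge> 7" by simp
    moreover have "(2*a + tt d * b)^2 \<ge> 0" by simp
    ultimately show False using e by linarith
  qed
  hence "a^2 = 1" using ab(2) by simp
  hence "a = 1 \<or> a = -1" by (simp add: power2_eq_1_iff)
  thus ?thesis using ab(1) b0 by auto
qed

lemma unit_1: "ounit d 1" unfolding unit_iff by simp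
lemma unit_m1: "ounit d (-1)" unfolding unit_iff using nrm_int[of "-1"] by simp

lemma N1_a: assumes n2: "nn d \<ge> 2" "d \<noteq> -1" "d \<noteq> -3" and z: "z \<in> Rg" "z \<noteq> 0"
  shows "\<exists>u. ounit d u \<and> u * z \<in> Aset d"
proof (cases "Im z > 0 \<or> (Im z = 0 \<and> Re z > 0)")
  case True
  hence "1 * z \<in> Aset d" using z Aset_gen[OF n2(2,3), of z] by simp
  thus ?thesis using unit_1 by blast
next
  case False
  have "Im z = 0 \<Longrightarrow> Re z \<noteq> 0" using z(2) by (metis complex.expand zero_complex.sel)
  hence "Im (-z) > 0 \<or> (Im (-z) = 0 \<and> Re (-z) > 0)" using False by auto
  hence "(-1) * z \<in> Aset d" using z Aset_gen[OF n2(2,3), of "-z"] by simp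
  thus ?thesis using unit_m1 by blast
qed

lemma N2_a: assumes n2: "nn d \<ge> 2" "d \<noteq> -1" "d \<noteq> -3" and x: "x \<in> Aset d" and u: "ounit d u" and ux: "u * x \<in> Aset d"
  shows "u = 1"
proof -
  have "u = 1 \<or> u = -1" using units_a[OF n2(1) u] .
  moreover have "u \<noteq> -1"
  proof
    assume "u = -1"
    hence "-x \<in> Aset d" using ux by simp
    hence "Im (-x) > 0 \<or> (Im (-x) = 0 \<and> Re (-x) > 0)" using Aset_gen[OF n2(2,3), of "-x"] by blast
    moreover have "Im x > 0 \<or> (Im x = 0 \<and> Re x > 0)" using x Aset_gen[OF n2(2,3), of x] by blast
    ultimately show False by auto
  qed
  ultimately show ?thesis by blast
qed


lemma unit_of: "a^2 + tt d * a * b + nn d * b^2 = 1 \<Longrightarrow> ounit d (of_int a + of_int b * w)"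
  unfolding unit_iff using nrm_coord by simp

lemma small3: fixes a :: int assumes "a^2 \<le> 1" shows "a = -1 \<or> a = 0 \<or> a = 1"
proof -
  have "\<bar>a\<bar> \<le> 1"
  proof (rule ccontr)
    assume "\<not> \<bar>a\<bar> \<le> 1"
    hence "2 \<le> \<bar>a\<bar>" by simp
    hence "2 * 2 \<le> \<bar>a\<bar> * \<bar>a\<bar>" by (intro mult_mono) auto
    thus False using assms by (simp add: power2_eq_square abs_mult[symmetric])
  qed
  thus ?thesis by auto
qed

lemma w_m1: "d = -1 \<Longrightarrow> w = \<i>"
  using omega_neg[OF dneg] by simp

lemma units_m1: assumes "d = -1" "ounit d u" shows "u = 1 \<or> u = -1 \<or> u = \<i> \<or> u = -\<i>"
proof -
  obtain a b where ab: "u = of_int a + of_int b * w" "a^2 + tt d * a * b + nn d * b^2 = 1" using unit_coord[OF assms(2)] by blast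
  have tn: "tt d = 0" "nn d = 1" using assms(1) unfolding tt_def nn_def by auto
  hence e: "a^2 + b^2 = 1" using ab by simp
  have "a^2 \<le> 1" "b^2 \<le> 1" using e zero_le_power2[of a] zero_le_power2[of b] by linarith+
  hence a3: "a = -1 \<or> a = 0 \<or> a = 1" and b3: "b = -1 \<or> b = 0 \<or> b = 1" using small3 by blast+
  have wi: "w = \<i>" using w_m1[OF assms(1)] .
  from a3 b3 show ?thesis using e ab(1) wi by (elim disjE) simp_all
qed

lemma N1_m1: assumes d1: "d = -1" and z: "z \<in> Rg" "z \<noteq> 0"
  shows "\<exists>u. ounit d u \<and> u * z \<in> Aset d"
proof -
  have wi: "w = \<i>" using w_m1[OF d1] .
  have u1: "ounit d 1" "ounit d (-1)" "ounit d \<i>" "ounit d (-\<i>)"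
    using unit_of[of 1 0] unit_of[of "-1" 0] unit_of[of 0 1] unit_of[of 0 "-1"] wi d1 unfolding tt_def nn_def by auto
  have A: "v \<in> Aset d \<longleftrightarrow> v \<in> Rg \<and> v \<noteq> 0 \<and> Re v > 0 \<and> Im v \<ge> 0" for v using Aset_m1[OF d1] .
  have nz: "Re z \<noteq> 0 \<or> Im z \<noteq> 0" using z(2) complex_eq_iff by auto
  have Rg: "\<And>u. ounit d u \<Longrightarrow> u * z \<in> Rg \<and> u * z \<noteq> 0" using z unfolding unit_iff by (auto simp: nrm_zero_iff[symmetric])
  consider "Re z > 0 \<and> Im z \<ge> 0" | "Re z < 0 \<and> Im z \<le> 0" | "Im z < 0 \<and> Re z \<ge> 0" | "Im z > 0 \<and> Re z \<le> 0"
    using nz by linarith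
  thus ?thesis
  proof cases
    case 1 thus ?thesis using A[of "1 * z"] Rg[OF u1(1)] u1(1) by auto
  next
    case 2 thus ?thesis using A[of "(-1) * z"] Rg[OF u1(2)] u1(2) by (intro exI[of _ "-1"]) auto
  next
    case 3 thus ?thesis using A[of "\<i> * z"] Rg[OF u1(3)] u1(3) by (intro exI[of _ "\<i>"]) auto
  next
    case 4 thus ?thesis using A[of "(-\<i>) * z"] Rg[OF u1(4)] u1(4) by (intro exI[of _ "-\<i>"]) auto
  qed
qed

lemma N2_m1: assumes d1: "d = -1" and x: "x \<in> Aset d" and u: "ounit d u" and ux: "u * x \<in> Aset d"
  shows "u = 1"
proof -
  have A: "v \<in> Aset d \<longleftrightarrow> v \<in> Rg \<and> v \<noteq> 0 \<and> Re v > 0 \<and> Im v \<ge> 0" for v using Aset_m1[OF d1] .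
  have "Re x > 0" "Im x \<ge> 0" "Re (u * x) > 0" "Im (u * x) \<ge> 0" using A[of x] A[of "u*x"] x ux by auto
  thus ?thesis using units_m1[OF d1 u] by auto
qed

lemma w_m3: "d = -3 \<Longrightarrow> w = Complex (1/2) (sqrt 3 / 2)"
  using omega_neg[OF dneg] by (simp add: complex_eq_iff)

lemma units_m3: assumes "d = -3" "ounit d u"
  shows "u = 1 \<or> u = -1 \<or> u = w \<or> u = -w \<or> u = w - 1 \<or> u = 1 - w"
proof -
  obtain a b where ab: "u = of_int a + of_int b * w" "a^2 + tt d * a * b + nn d * b^2 = 1" using unit_coord[OF assms(2)] by blast
  have tn: "tt d = 1" "nn d = 1" using assms(1) unfolding tt_def nn_def by auto
  have e: "(2*a + b)^2 + 3 * b^2 = 4" using four_norm[of a b] ab(2) tn by simp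
  have "b^2 \<le> 1"
  proof (rule ccontr)
    assume "\<not> b^2 \<le> 1"
    hence "b^2 \<ge> 2" by simp
    thus False using e zero_le_power2[of "2*a+b"] by linarith
  qed
  hence b: "b = -1 \<or> b = 0 \<or> b = 1" using small3 by blast
  have c4: "(2*a+b)^2 \<le> 4" using e zero_le_power2[of b] by linarith
  have "\<bar>2*a+b\<bar> \<le> 2"
  proof (rule ccontr)
    assume "\<not> \<bar>2*a+b\<bar> \<le> 2"
    hence "3 \<le> \<bar>2*a+b\<bar>" by simp
    hence "3 * 3 \<le> \<bar>2*a+b\<bar> * \<bar>2*a+b\<bar>" by (intro mult_mono) auto
    thus False using c4 by (simp add: power2_eq_square abs_mult[symmetric])
  qed
  hence "-2 \<le> 2*a+b" "2*a+b \<le> 2" by auto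
  hence a: "a = -1 \<or> a = 0 \<or> a = 1" using b by presburger
  from a b show ?thesis using e ab(1) by (elim disjE) (simp_all add: algebra_simps)
qed


lemma m3_facts: assumes d3: "d = -3"
  shows "\<And>z. Re (w * z) = Re z / 2 - sqrt 3 * Im z / 2" "\<And>z. Im (w * z) = sqrt 3 * Re z / 2 + Im z / 2"
proof -
  have ww: "w = Complex (1/2) (sqrt 3 / 2)" using w_m3[OF d3] .
  fix z show "Re (w * z) = Re z / 2 - sqrt 3 * Im z / 2" unfolding ww by simp
next
  have ww: "w = Complex (1/2) (sqrt 3 / 2)" using w_m3[OF d3] .
  fix z show "Im (w * z) = sqrt 3 * Re z / 2 + Im z / 2" unfolding ww by simp
qed

lemma T3: assumes d3: "d = -3" and z: "z \<in> Rg" "z \<noteq> 0" and H: "Im z > 0 \<or> (Im z = 0 \<and> Re z > 0)"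
  shows "\<exists>u. (u = 1 \<or> u = 1 - w \<or> u = -w) \<and> u * z \<in> Aset d"
proof -
  define x where "x = Re z"
  define y where "y = Im z"
  define X where "X = sqrt 3 * x"
  have A: "v \<in> Aset d \<longleftrightarrow> v \<in> Rg \<and> v \<noteq> 0 \<and> Im v \<ge> 0 \<and> Im v < sqrt 3 * Re v" for v using Aset_m3[OF d3] .
  have s3: "sqrt 3 * sqrt 3 = (3::real)" by simp
  have nzu: "\<And>u. u \<noteq> 0 \<Longrightarrow> u * z \<noteq> 0" using z by simp
  have Xp: "x > 0 \<Longrightarrow> X > 0" unfolding X_def by simp
  have wnz: "w \<noteq> 0" "1 - w \<noteq> 0" using w_m3[OF d3] by (auto simp: complex_eq_iff)
  consider "y < X" | "y \<ge> X" "y > -X" | "y \<ge> X" "y \<le> -X" by linarith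
  thus ?thesis
  proof cases
    case 1
    hence "Im z \<ge> 0 \<and> Im z < sqrt 3 * Re z" using H unfolding x_def y_def X_def by auto
    thus ?thesis using A[of "1 * z"] z by (intro exI[of _ 1]) auto
  next
    case 2
    have re: "Re ((1 - w) * z) = x / 2 + sqrt 3 * y / 2" and im: "Im ((1 - w) * z) = y / 2 - X / 2"
      using m3_facts[OF d3, of z] unfolding x_def y_def X_def by (simp_all add: left_diff_distrib)
    have "sqrt 3 * Re ((1 - w) * z) = X / 2 + 3 * y / 2" unfolding re X_def using s3 by (simp add: algebra_simps)
    hence "Im ((1 - w) * z) \<ge> 0 \<and> Im ((1 - w) * z) < sqrt 3 * Re ((1 - w) * z)" using 2 im by auto
    moreover have "(1 - w) * z \<in> Rg" using z by simp
    ultimately show ?thesis using A[of "(1 - w) * z"] nzu[OF wnz(2)] by (intro exI[of _ "1 - w"]) auto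
  next
    case 3
    have y0: "y > 0" using H 3 Xp unfolding x_def y_def by auto
    have re: "Re (-w * z) = - x / 2 + sqrt 3 * y / 2" and im: "Im (-w * z) = - X / 2 - y / 2"
      using m3_facts[OF d3, of z] unfolding x_def y_def X_def by simp_all
    have "sqrt 3 * Re (-w * z) = - X / 2 + 3 * y / 2" unfolding re X_def using s3 by (simp add: algebra_simps)
    hence "Im (-w * z) \<ge> 0 \<and> Im (-w * z) < sqrt 3 * Re (-w * z)" using 3 y0 im by auto
    moreover have "-w * z \<in> Rg" using z by simp
    moreover have "-w * z \<noteq> 0" using nzu[of "-w"] wnz by simp
    ultimately show ?thesis using A[of "-w * z"] by (intro exI[of _ "-w"]) auto
  qed
qed

lemma N1_m3: assumes d3: "d = -3" and z: "z \<in> Rg" "z \<noteq> 0"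
  shows "\<exists>u. ounit d u \<and> u * z \<in> Aset d"
proof -
  have tn: "tt d = 1" "nn d = 1" using d3 unfolding tt_def nn_def by auto
  have us: "ounit d 1" "ounit d (1 - w)" "ounit d (-w)" "ounit d (-1)" "ounit d (w - 1)" "ounit d w"
    using unit_of[of 1 0] unit_of[of 1 "-1"] unit_of[of 0 "-1"] unit_of[of "-1" 0] unit_of[of "-1" 1] unit_of[of 0 1] tn
    by (simp_all add: algebra_simps)
  show ?thesis
  proof (cases "Im z > 0 \<or> (Im z = 0 \<and> Re z > 0)")
    case True
    then obtain u where "(u = 1 \<or> u = 1 - w \<or> u = -w) \<and> u * z \<in> Aset d" using T3[OF d3 z] by blast
    thus ?thesis using us by blast
  next
    case False
    have "Im z = 0 \<Longrightarrow> Re z \<noteq> 0" using z(2) by (metis complex.expand zero_complex.sel)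
    hence H: "Im (-z) > 0 \<or> (Im (-z) = 0 \<and> Re (-z) > 0)" using False by auto
    obtain u where u: "(u = 1 \<or> u = 1 - w \<or> u = -w) \<and> u * (-z) \<in> Aset d" using T3[OF d3 _ _ H] z by auto
    hence "(-u) * z \<in> Aset d" by simp
    moreover have "-u = -1 \<or> -u = w - 1 \<or> -u = w" using u by auto
    hence "ounit d (-u)" using us by auto
    ultimately show ?thesis by blast
  qed
qed

lemma N2_m3: assumes d3: "d = -3" and x: "x \<in> Aset d" and u: "ounit d u" and ux: "u * x \<in> Aset d"
  shows "u = 1"
proof -
  have A: "v \<in> Aset d \<longleftrightarrow> v \<in> Rg \<and> v \<noteq> 0 \<and> Im v \<ge> 0 \<and> Im v < sqrt 3 * Re v" for v using Aset_m3[OF d3] .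
  define X where "X = sqrt 3 * Re x"
  define y where "y = Im x"
  have s3: "sqrt 3 * sqrt 3 = (3::real)" by simp
  have T: "0 \<le> y" "y < X" using A[of x] x unfolding X_def y_def by auto
  have T2: "Im (u * x) \<ge> 0" "Im (u * x) < sqrt 3 * Re (u * x)" using A[of "u * x"] ux by auto
  have mf: "Re (w * x) = Re x / 2 - sqrt 3 * y / 2" "Im (w * x) = X / 2 + y / 2"
    using m3_facts[OF d3, of x] unfolding X_def y_def by auto
  have sw: "sqrt 3 * Re (w * x) = X / 2 - 3 * y / 2" unfolding mf X_def using s3 by (simp add: algebra_simps)
  from units_m3[OF d3 u] show ?thesis
  proof (elim disjE)
    assume "u = 1" thus ?thesis .
  next
    assume "u = -1" thus ?thesis using T T2 unfolding X_def y_def by auto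
  next
    assume "u = w" thus ?thesis using T T2 mf sw by auto
  next
    assume "u = -w" thus ?thesis using T T2 mf sw by auto
  next
    assume uu: "u = w - 1"
    have r: "Re (u * x) = Re (w * x) - Re x" "Im (u * x) = Im (w * x) - y" unfolding uu y_def by (simp_all add: left_diff_distrib)
    have "sqrt 3 * Re (u * x) = sqrt 3 * Re (w * x) - X" unfolding r X_def by (simp add: algebra_simps)
    thus ?thesis using T T2 mf sw r by linarith
  next
    assume uu: "u = 1 - w"
    have r: "Re (u * x) = Re x - Re (w * x)" "Im (u * x) = y - Im (w * x)" unfolding uu y_def by (simp_all add: left_diff_distrib)
    have "sqrt 3 * Re (u * x) = X - sqrt 3 * Re (w * x)" unfolding r X_def by (simp add: algebra_simps)
    thus ?thesis using T T2 mf sw r by linarith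
  qed
qed

end


context qf begin

lemma quad_mod: fixes A B t n q :: int
  shows "(A^2 + t*A*B + n*B^2) mod q = ((A mod q)^2 + t*(A mod q)*(B mod q) + n*(B mod q)^2) mod q"
proof -
  define A' where "A' = A mod q"
  define B' where "B' = B mod q"
  have dA: "q dvd A - A'" and dB: "q dvd B - B'" unfolding A'_def B'_def by simp_all
  have e: "(A^2 + t*A*B + n*B^2) - (A'^2 + t*A'*B' + n*B'^2) = (A - A')*(A+A') + t*((A-A')*B + A'*(B-B')) + n*((B-B')*(B+B'))"
    by (simp add: algebra_simps power2_eq_square)
  have "q dvd (A - A')*(A+A') + t*((A-A')*B + A'*(B-B')) + n*((B-B')*(B+B'))"
    using dA dB by (intro dvd_add dvd_mult dvd_mult2) auto
  hence "q dvd (A^2 + t*A*B + n*B^2) - (A'^2 + t*A'*B' + n*B'^2)" using e by simp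
  thus ?thesis unfolding A'_def[symmetric] B'_def[symmetric] by (simp add: mod_eq_dvd_iff)
qed

lemma inert_crit:
  assumes q: "prime q" and chk: "\<forall>k\<in>{..<nat q}. \<not> q dvd (int k)^2 + tt d * int k + nn d"
  shows "inert q"
  unfolding inert_def
proof (intro ballI impI)
  fix x assume x: "x \<in> Rg" and qx: "q dvd nrm x"
  obtain a b where ab: "x = of_int a + of_int b * w" using x unfolding Od_iff by blast
  have N: "q dvd a^2 + tt d * a * b + nn d * b^2" using qx ab nrm_coord by simp
  have q1: "q > 1" using q prime_gt_1_int by auto
  show "of_int q \<preceq> x"
  proof (cases "q dvd b")
    case True
    then obtain b' where b': "b = q * b'" by auto
    have "q dvd tt d * a * b + nn d * b^2" using b' by (intro dvd_add) (auto simp: power2_eq_square)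
    hence "q dvd a^2" using N dvd_add_left_iff[of q "tt d * a * b + nn d * b^2" "a^2"] by (simp add: add.assoc)
    hence "q dvd a" using q prime_dvd_power_int by blast
    then obtain a' where a': "a = q * a'" by auto
    have "x = of_int q * (of_int a' + of_int b' * w)" using ab a' b' by (simp add: algebra_simps)
    moreover have "of_int a' + of_int b' * w \<in> Rg" by simp
    ultimately show ?thesis unfolding odvd_def by blast
  next
    case False
    obtain u v where uv: "u * b + v * q = 1" using bezout_inv[OF q False] by blast
    define z where "z = (a * u) mod q"
    have z: "0 \<le> z" "z < q" unfolding z_def using q1 by auto
    have Bm: "(b * u) mod q = 1"
    proof -
      have "b * u = 1 + (-v) * q" using uv by (simp add: algebra_simps)
      hence "(b * u) mod q = (1 + (-v) * q) mod q" by simp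
      also have "\<dots> = 1 mod q" by (rule mod_mult_self1)
      finally have "(b * u) mod q = 1 mod q" .
      thus ?thesis using q1 by simp
    qed
    have "q dvd u^2 * (a^2 + tt d * a * b + nn d * b^2)" using N by simp
    moreover have "u^2 * (a^2 + tt d * a * b + nn d * b^2) = (a*u)^2 + tt d * (a*u) * (b*u) + nn d * (b*u)^2"
      by (simp add: algebra_simps power2_eq_square)
    ultimately have "((a*u)^2 + tt d * (a*u) * (b*u) + nn d * (b*u)^2) mod q = 0" by simp
    hence "(z^2 + tt d * z * 1 + nn d * 1^2) mod q = 0" using quad_mod[of "a*u" "tt d" "b*u" "nn d" q] Bm unfolding z_def by simp
    hence "q dvd (int (nat z))^2 + tt d * int (nat z) + nn d" using z by (simp add: dvd_eq_mod_eq_0)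
    moreover have "nat z \<in> {..<nat q}" using z by auto
    ultimately show ?thesis using chk by blast
  qed
qed

lemma small_from:
  assumes h: "\<forall>k\<in>{..<Suc (nat K)}. prime (int k) \<longrightarrow> inert (int k) \<or> (\<exists>r\<in>Rg. nrm r = int k)"
    and q: "prime q" "q \<le> K"
  shows "inert q \<or> (\<exists>r\<in>Rg. nrm r = q)"
proof -
  have q0: "q \<ge> 0" using prime_gt_1_int[OF q(1)] by simp
  have "nat q \<in> {..<Suc (nat K)}" using q q0 by auto
  moreover have "int (nat q) = q" using q0 by simp
  ultimately show ?thesis using h q(1) by metis
qed

end

lemma mk_qfM:
  assumes "d < 0"
    and "\<forall>k\<in>{..<Suc (nat K)}. prime (int k) \<longrightarrow> qf.inert d (int k) \<or> (\<exists>r\<in>Od d. nrm r = int k)"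
    and "2 * sqrt (real_of_int (nn d)) + real_of_int (tt d) < real_of_int K + 1"
    and "\<And>z. z \<in> Od d \<Longrightarrow> z \<noteq> 0 \<Longrightarrow> \<exists>u. ounit d u \<and> u * z \<in> Aset d"
    and "\<And>x u. x \<in> Aset d \<Longrightarrow> ounit d u \<Longrightarrow> u * x \<in> Aset d \<Longrightarrow> u = 1"
  shows "qfM d K"
proof -
  interpret qf d using assms(1) by unfold_locales
  show ?thesis
    by unfold_locales (use assms small_from in auto)
qed


lemma inst_1: "qfM (-1) 2"
proof -
  interpret qf "-1" by unfold_locales simp
  have tn: "tt (-1) = 0" "nn (-1) = 1" by (simp_all add: tt_def nn_def)
  have r2: "\<exists>r\<in>Od (-1). nrm r = 2"
  proof (rule bexI[of _ "of_int (1) + of_int (1) * omega (-1)"])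
    show "nrm (of_int (1) + of_int (1) * omega (-1)) = 2" unfolding nrm_coord tn by simp
    show "of_int (1) + of_int (1) * omega (-1) \<in> Od (-1)" unfolding Od_iff by blast
  qed
  show ?thesis
  proof (rule mk_qfM)
    show "\<forall>k\<in>{..<Suc (nat 2)}. prime (int k) \<longrightarrow> inert (int k) \<or> (\<exists>r\<in>Od (-1). nrm r = int k)"
      by (simp add: lessThan_nat_numeral r2)
    have "sqrt 1 < (3/2::real)" by (rule real_less_lsqrt) (simp_all add: power2_eq_square)
    thus "2 * sqrt (real_of_int (nn (-1))) + real_of_int (tt (-1)) < real_of_int 2 + 1" unfolding tn by simp
    show "\<And>z. z \<in> Od (-1) \<Longrightarrow> z \<noteq> 0 \<Longrightarrow> \<exists>u. ounit (-1) u \<and> u * z \<in> Aset (-1)" using N1_m1 by simp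
    show "\<And>x u. x \<in> Aset (-1) \<Longrightarrow> ounit (-1) u \<Longrightarrow> u * x \<in> Aset (-1) \<Longrightarrow> u = 1" using N2_m1 by simp
  qed simp
qed
lemma inst_2: "qfM (-2) 2"
proof -
  interpret qf "-2" by unfold_locales simp
  have tn: "tt (-2) = 0" "nn (-2) = 2" by (simp_all add: tt_def nn_def)
  have r2: "\<exists>r\<in>Od (-2). nrm r = 2"
  proof (rule bexI[of _ "of_int (0) + of_int (1) * omega (-2)"])
    show "nrm (of_int (0) + of_int (1) * omega (-2)) = 2" unfolding nrm_coord tn by simp
    show "of_int (0) + of_int (1) * omega (-2) \<in> Od (-2)" unfolding Od_iff by blast
  qed
  show ?thesis
  proof (rule mk_qfM)
    show "\<forall>k\<in>{..<Suc (nat 2)}. prime (int k) \<longrightarrow> inert (int k) \<or> (\<exists>r\<in>Od (-2). nrm r = int k)"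
      by (simp add: lessThan_nat_numeral r2)
    have "sqrt 2 < (3/2::real)" by (rule real_less_lsqrt) (simp_all add: power2_eq_square)
    thus "2 * sqrt (real_of_int (nn (-2))) + real_of_int (tt (-2)) < real_of_int 2 + 1" unfolding tn by simp
    have h: "nn (-2) \<ge> 2" "(-2::int) \<noteq> -1" "(-2::int) \<noteq> -3" using tn by simp_all
    show "\<And>z. z \<in> Od (-2) \<Longrightarrow> z \<noteq> 0 \<Longrightarrow> \<exists>u. ounit (-2) u \<and> u * z \<in> Aset (-2)" using N1_a[OF h] by blast
    show "\<And>x u. x \<in> Aset (-2) \<Longrightarrow> ounit (-2) u \<Longrightarrow> u * x \<in> Aset (-2) \<Longrightarrow> u = 1" using N2_a[OF h] by blast
  qed simp
qed
lemma inst_3: "qfM (-3) 3"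
proof -
  interpret qf "-3" by unfold_locales simp
  have tn: "tt (-3) = 1" "nn (-3) = 1" by (simp_all add: tt_def nn_def)
  have i2: "inert 2" by (rule inert_crit) (simp_all add: tn lessThan_nat_numeral)
  have r3: "\<exists>r\<in>Od (-3). nrm r = 3"
  proof (rule bexI[of _ "of_int (1) + of_int (1) * omega (-3)"])
    show "nrm (of_int (1) + of_int (1) * omega (-3)) = 3" unfolding nrm_coord tn by simp
    show "of_int (1) + of_int (1) * omega (-3) \<in> Od (-3)" unfolding Od_iff by blast
  qed
  show ?thesis
  proof (rule mk_qfM)
    show "\<forall>k\<in>{..<Suc (nat 3)}. prime (int k) \<longrightarrow> inert (int k) \<or> (\<exists>r\<in>Od (-3). nrm r = int k)"
      by (simp add: lessThan_nat_numeral i2 r3)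
    have "sqrt 1 < (3/2::real)" by (rule real_less_lsqrt) (simp_all add: power2_eq_square)
    thus "2 * sqrt (real_of_int (nn (-3))) + real_of_int (tt (-3)) < real_of_int 3 + 1" unfolding tn by simp
    show "\<And>z. z \<in> Od (-3) \<Longrightarrow> z \<noteq> 0 \<Longrightarrow> \<exists>u. ounit (-3) u \<and> u * z \<in> Aset (-3)" using N1_m3 by simp
    show "\<And>x u. x \<in> Aset (-3) \<Longrightarrow> ounit (-3) u \<Longrightarrow> u * x \<in> Aset (-3) \<Longrightarrow> u = 1" using N2_m3 by simp
  qed simp
qed
lemma inst_7: "qfM (-7) 3"
proof -
  interpret qf "-7" by unfold_locales simp
  have tn: "tt (-7) = 1" "nn (-7) = 2" by (simp_all add: tt_def nn_def)
  have i3: "inert 3" by (rule inert_crit) (simp_all add: tn lessThan_nat_numeral)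
  have r2: "\<exists>r\<in>Od (-7). nrm r = 2"
  proof (rule bexI[of _ "of_int (0) + of_int (1) * omega (-7)"])
    show "nrm (of_int (0) + of_int (1) * omega (-7)) = 2" unfolding nrm_coord tn by simp
    show "of_int (0) + of_int (1) * omega (-7) \<in> Od (-7)" unfolding Od_iff by blast
  qed
  show ?thesis
  proof (rule mk_qfM)
    show "\<forall>k\<in>{..<Suc (nat 3)}. prime (int k) \<longrightarrow> inert (int k) \<or> (\<exists>r\<in>Od (-7). nrm r = int k)"
      by (simp add: lessThan_nat_numeral i3 r2)
    have "sqrt 2 < (3/2::real)" by (rule real_less_lsqrt) (simp_all add: power2_eq_square)
    thus "2 * sqrt (real_of_int (nn (-7))) + real_of_int (tt (-7)) < real_of_int 3 + 1" unfolding tn by simp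
    have h: "nn (-7) \<ge> 2" "(-7::int) \<noteq> -1" "(-7::int) \<noteq> -3" using tn by simp_all
    show "\<And>z. z \<in> Od (-7) \<Longrightarrow> z \<noteq> 0 \<Longrightarrow> \<exists>u. ounit (-7) u \<and> u * z \<in> Aset (-7)" using N1_a[OF h] by blast
    show "\<And>x u. x \<in> Aset (-7) \<Longrightarrow> ounit (-7) u \<Longrightarrow> u * x \<in> Aset (-7) \<Longrightarrow> u = 1" using N2_a[OF h] by blast
  qed simp
qed
lemma inst_11: "qfM (-11) 4"
proof -
  interpret qf "-11" by unfold_locales simp
  have tn: "tt (-11) = 1" "nn (-11) = 3" by (simp_all add: tt_def nn_def)
  have i2: "inert 2" by (rule inert_crit) (simp_all add: tn lessThan_nat_numeral)
  have r3: "\<exists>r\<in>Od (-11). nrm r = 3"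
  proof (rule bexI[of _ "of_int (0) + of_int (1) * omega (-11)"])
    show "nrm (of_int (0) + of_int (1) * omega (-11)) = 3" unfolding nrm_coord tn by simp
    show "of_int (0) + of_int (1) * omega (-11) \<in> Od (-11)" unfolding Od_iff by blast
  qed
  show ?thesis
  proof (rule mk_qfM)
    show "\<forall>k\<in>{..<Suc (nat 4)}. prime (int k) \<longrightarrow> inert (int k) \<or> (\<exists>r\<in>Od (-11). nrm r = int k)"
      by (simp add: lessThan_nat_numeral i2 r3)
    have "sqrt 3 < (2::real)" by (rule real_less_lsqrt) (simp_all add: power2_eq_square)
    thus "2 * sqrt (real_of_int (nn (-11))) + real_of_int (tt (-11)) < real_of_int 4 + 1" unfolding tn by simp
    have h: "nn (-11) \<ge> 2" "(-11::int) \<noteq> -1" "(-11::int) \<noteq> -3" using tn by simp_all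
    show "\<And>z. z \<in> Od (-11) \<Longrightarrow> z \<noteq> 0 \<Longrightarrow> \<exists>u. ounit (-11) u \<and> u * z \<in> Aset (-11)" using N1_a[OF h] by blast
    show "\<And>x u. x \<in> Aset (-11) \<Longrightarrow> ounit (-11) u \<Longrightarrow> u * x \<in> Aset (-11) \<Longrightarrow> u = 1" using N2_a[OF h] by blast
  qed simp
qed
lemma inst_19: "qfM (-19) 5"
proof -
  interpret qf "-19" by unfold_locales simp
  have tn: "tt (-19) = 1" "nn (-19) = 5" by (simp_all add: tt_def nn_def)
  have i2: "inert 2" by (rule inert_crit) (simp_all add: tn lessThan_nat_numeral)
  have i3: "inert 3" by (rule inert_crit) (simp_all add: tn lessThan_nat_numeral)
  have r5: "\<exists>r\<in>Od (-19). nrm r = 5"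
  proof (rule bexI[of _ "of_int (0) + of_int (1) * omega (-19)"])
    show "nrm (of_int (0) + of_int (1) * omega (-19)) = 5" unfolding nrm_coord tn by simp
    show "of_int (0) + of_int (1) * omega (-19) \<in> Od (-19)" unfolding Od_iff by blast
  qed
  show ?thesis
  proof (rule mk_qfM)
    show "\<forall>k\<in>{..<Suc (nat 5)}. prime (int k) \<longrightarrow> inert (int k) \<or> (\<exists>r\<in>Od (-19). nrm r = int k)"
      by (simp add: lessThan_nat_numeral i2 i3 r5)
    have "sqrt 5 < (5/2::real)" by (rule real_less_lsqrt) (simp_all add: power2_eq_square)
    thus "2 * sqrt (real_of_int (nn (-19))) + real_of_int (tt (-19)) < real_of_int 5 + 1" unfolding tn by simp
    have h: "nn (-19) \<ge> 2" "(-19::int) \<noteq> -1" "(-19::int) \<noteq> -3" using tn by simp_all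
    show "\<And>z. z \<in> Od (-19) \<Longrightarrow> z \<noteq> 0 \<Longrightarrow> \<exists>u. ounit (-19) u \<and> u * z \<in> Aset (-19)" using N1_a[OF h] by blast
    show "\<And>x u. x \<in> Aset (-19) \<Longrightarrow> ounit (-19) u \<Longrightarrow> u * x \<in> Aset (-19) \<Longrightarrow> u = 1" using N2_a[OF h] by blast
  qed simp
qed
lemma inst_43: "qfM (-43) 7"
proof -
  interpret qf "-43" by unfold_locales simp
  have tn: "tt (-43) = 1" "nn (-43) = 11" by (simp_all add: tt_def nn_def)
  have i2: "inert 2" by (rule inert_crit) (simp_all add: tn lessThan_nat_numeral)
  have i3: "inert 3" by (rule inert_crit) (simp_all add: tn lessThan_nat_numeral)
  have i5: "inert 5" by (rule inert_crit) (simp_all add: tn lessThan_nat_numeral)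
  have i7: "inert 7" by (rule inert_crit) (simp_all add: tn lessThan_nat_numeral)
  show ?thesis
  proof (rule mk_qfM)
    show "\<forall>k\<in>{..<Suc (nat 7)}. prime (int k) \<longrightarrow> inert (int k) \<or> (\<exists>r\<in>Od (-43). nrm r = int k)"
      by (simp add: lessThan_nat_numeral i2 i3 i5 i7)
    have "sqrt 11 < (7/2::real)" by (rule real_less_lsqrt) (simp_all add: power2_eq_square)
    thus "2 * sqrt (real_of_int (nn (-43))) + real_of_int (tt (-43)) < real_of_int 7 + 1" unfolding tn by simp
    have h: "nn (-43) \<ge> 2" "(-43::int) \<noteq> -1" "(-43::int) \<noteq> -3" using tn by simp_all
    show "\<And>z. z \<in> Od (-43) \<Longrightarrow> z \<noteq> 0 \<Longrightarrow> \<exists>u. ounit (-43) u \<and> u * z \<in> Aset (-43)" using N1_a[OF h] by blast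
    show "\<And>x u. x \<in> Aset (-43) \<Longrightarrow> ounit (-43) u \<Longrightarrow> u * x \<in> Aset (-43) \<Longrightarrow> u = 1" using N2_a[OF h] by blast
  qed simp
qed
lemma inst_67: "qfM (-67) 9"
proof -
  interpret qf "-67" by unfold_locales simp
  have tn: "tt (-67) = 1" "nn (-67) = 17" by (simp_all add: tt_def nn_def)
  have i2: "inert 2" by (rule inert_crit) (simp_all add: tn lessThan_nat_numeral)
  have i3: "inert 3" by (rule inert_crit) (simp_all add: tn lessThan_nat_numeral)
  have i5: "inert 5" by (rule inert_crit) (simp_all add: tn lessThan_nat_numeral)
  have i7: "inert 7" by (rule inert_crit) (simp_all add: tn lessThan_nat_numeral)
  show ?thesis
  proof (rule mk_qfM)
    show "\<forall>k\<in>{..<Suc (nat 9)}. prime (int k) \<longrightarrow> inert (int k) \<or> (\<exists>r\<in>Od (-67). nrm r = int k)"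
      by (simp add: lessThan_nat_numeral i2 i3 i5 i7)
    have "sqrt 17 < (9/2::real)" by (rule real_less_lsqrt) (simp_all add: power2_eq_square)
    thus "2 * sqrt (real_of_int (nn (-67))) + real_of_int (tt (-67)) < real_of_int 9 + 1" unfolding tn by simp
    have h: "nn (-67) \<ge> 2" "(-67::int) \<noteq> -1" "(-67::int) \<noteq> -3" using tn by simp_all
    show "\<And>z. z \<in> Od (-67) \<Longrightarrow> z \<noteq> 0 \<Longrightarrow> \<exists>u. ounit (-67) u \<and> u * z \<in> Aset (-67)" using N1_a[OF h] by blast
    show "\<And>x u. x \<in> Aset (-67) \<Longrightarrow> ounit (-67) u \<Longrightarrow> u * x \<in> Aset (-67) \<Longrightarrow> u = 1" using N2_a[OF h] by blast
  qed simp
qed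
lemma inst_163: "qfM (-163) 13"
proof -
  interpret qf "-163" by unfold_locales simp
  have tn: "tt (-163) = 1" "nn (-163) = 41" by (simp_all add: tt_def nn_def)
  have i2: "inert 2" by (rule inert_crit) (simp_all add: tn lessThan_nat_numeral)
  have i3: "inert 3" by (rule inert_crit) (simp_all add: tn lessThan_nat_numeral)
  have i5: "inert 5" by (rule inert_crit) (simp_all add: tn lessThan_nat_numeral)
  have i7: "inert 7" by (rule inert_crit) (simp_all add: tn lessThan_nat_numeral)
  have i11: "inert 11" by (rule inert_crit) (simp_all add: tn lessThan_nat_numeral)
  have i13: "inert 13" by (rule inert_crit) (simp_all add: tn lessThan_nat_numeral)
  show ?thesis
  proof (rule mk_qfM)
    show "\<forall>k\<in>{..<Suc (nat 13)}. prime (int k) \<longrightarrow> inert (int k) \<or> (\<exists>r\<in>Od (-163). nrm r = int k)"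
      by (simp add: lessThan_nat_numeral i2 i3 i5 i7 i11 i13)
    have "sqrt 41 < (13/2::real)" by (rule real_less_lsqrt) (simp_all add: power2_eq_square)
    thus "2 * sqrt (real_of_int (nn (-163))) + real_of_int (tt (-163)) < real_of_int 13 + 1" unfolding tn by simp
    have h: "nn (-163) \<ge> 2" "(-163::int) \<noteq> -1" "(-163::int) \<noteq> -3" using tn by simp_all
    show "\<And>z. z \<in> Od (-163) \<Longrightarrow> z \<noteq> 0 \<Longrightarrow> \<exists>u. ounit (-163) u \<and> u * z \<in> Aset (-163)" using N1_a[OF h] by blast
    show "\<And>x u. x \<in> Aset (-163) \<Longrightarrow> ounit (-163) u \<Longrightarrow> u * x \<in> Aset (-163) \<Longrightarrow> u = 1" using N2_a[OF h] by blast
  qed simp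
qed
theorem theorem2p6:
  fixes b :: rat and d :: int
  assumes "b > 1"
    and "d \<in> {-163, -67, -43, -19, -11, -7, -3, -2, -1}"
  shows "\<exists>g. (\<forall>n\<in>U_set b. g n \<in> V_set d b) \<and> inj_on g (U_set b)"
proof -
  have "d = -163 \<or> d = -67 \<or> d = -43 \<or> d = -19 \<or> d = -11 \<or> d = -7 \<or> d = -3 \<or> d = -2 \<or> d = -1" using assms(2) by simp
  thus ?thesis
  proof (elim disjE)
    assume "d = -163" thus ?thesis using qfM.main_qfM[OF inst_163] by simp
  next
    assume "d = -67" thus ?thesis using qfM.main_qfM[OF inst_67] by simp
  next
    assume "d = -43" thus ?thesis using qfM.main_qfM[OF inst_43] by simp
  next
    assume "d = -19" thus ?thesis using qfM.main_qfM[OF inst_19] by simp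
  next
    assume "d = -11" thus ?thesis using qfM.main_qfM[OF inst_11] by simp
  next
    assume "d = -7" thus ?thesis using qfM.main_qfM[OF inst_7] by simp
  next
    assume "d = -3" thus ?thesis using qfM.main_qfM[OF inst_3] by simp
  next
    assume "d = -2" thus ?thesis using qfM.main_qfM[OF inst_2] by simp
  next
    assume "d = -1" thus ?thesis using qfM.main_qfM[OF inst_1] by simp
  qed
qed


end
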